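(* Let $\rho:L^p_{\mathcal G}(\mathcal F)\to L^0(\mathcal G)$. (i) If $\rho$ is ($\downarrow$MON), (REG) and (CAS), then for every $Q\in\mathcal P^q$ and $X\in L^p_{\mathcal G}(\mathcal F)$, $$R\big(E_Q[-X|\mathcal G],Q\big)=E_Q[-X|\mathcal G]-\rho^*(-Q),\qquad \rho^*(-Q):=\operatorname*{ess\,sup}_{\xi\in L^p_{\mathcal G}(\mathcal F)}\big\{E_Q[-\xi|\mathcal G]-\rho(\xi)\big\},$$ where $R(Y,Q)=\operatorname{ess\,inf}_{\xi\in L^p_{\mathcal G}(\mathcal F)}\{\rho(\xi): E_Q[-\xi|\mathcal G]=Y\}$. (ii) If $\rho$ is (REG), ($\downarrow$MON), (EVQ) and (CAS), then for every $X\in L^p_{\mathcal G}(\mathcal F)$, $$\rho(X)=\operatorname*{ess\,sup}_{Q\in\mathcal P^q}\big\{E_Q[-X|\mathcal G]-\rho^*(-Q)\big\}.$$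
   Context: Let $(\Omega,\mathcal F,\mathbb P)$ be a probability space, $\mathcal G\subseteq\mathcal F$ a sub-$\sigma$-algebra; (in)equalities a.s.; "on $A$" means a.s. on $A$. $L^0(\mathcal G)$: a.s. finite $\mathcal G$-measurable r.v. Fix $p\in[1,\infty]$, $1/p+1/q=1$. $\|X|\mathcal G\|_p=E[|X|^p|\mathcal G]^{1/p}$ ($p<\infty$, with $E[W|\mathcal G]=\lim_nE[W\wedge n|\mathcal G]$ for $W\ge0$), $\|X|\mathcal G\|_\infty=\operatorname{ess\,inf}\{Y\ \mathcal G\text{-meas.},Y\ge|X|\}$; $L^p_{\mathcal G}(\mathcal F)=\{X:\|X|\mathcal G\|_p<\infty \text{ a.s.}\}=L^0(\mathcal G)\cdot L^p(\mathcal F)$ with $E[YW|\mathcal G]:=YE[W|\mathcal G]$; likewise $L^q_{\mathcal G}(\mathcal F)$. $\mathcal P^q=\{Z\in L^q_{\mathcal G}(\mathcal F):Z\ge0,E[Z|\mathcal G]=1\}$, identified with probabilities $Q$, $dQ/d\mathbb P=Z$, $E_Q[X|\mathcal G]=E[ZX|\mathcal G]$. (REG): $\rho(X_1\mathbf 1_A+X_2\mathbf 1_{A^c})=\rho(X_1)\mathbf 1_A+\rho(X_2)\mathbf 1_{A^c}$, $A\in\mathcal G$. ($\downarrow$MON): $X_1\ge X_2\Rightarrow\rho(X_1)\le\rho(X_2)$. (CAS): $\rho(X+\Lambda)=\rho(X)-\Lambda$ for all $\Lambda\in L^0(\mathcal G)$, $X\in L^p_{\mathcal G}(\mathcal F)$.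 (EVQ): for every $Y\in L^0(\mathcal G)$ the set $\{\xi:\rho(\xi)\le Y\}$ is conditionally evenly convex, where: for $\mathcal C\subseteq L^p_{\mathcal G}(\mathcal F)$, $A_{\mathcal C}$ is the maximal $A\in\mathcal G$ with $\mathcal C\mathbf 1_A=L^p_{\mathcal G}(\mathcal F)\mathbf 1_A$, $D_{\mathcal C}=\Omega\setminus A_{\mathcal C}$; $X$ is outside $\mathcal C$ if for no $A\in\mathcal G$, $A\subseteq D_{\mathcal C}$, $\mathbb P(A)>0$, is there $\xi\in\mathcal C$ with $X\mathbf 1_A=\xi\mathbf 1_A$; $\mathcal C$ is conditionally evenly convex if $\sum_n\mathbf 1_{A_n}X_n\in\mathcal C$ for all countable $\mathcal G$-partitions $\{A_n\}$ and $\{X_n\}\subseteq\mathcal C$, and for every $X$ outside $\mathcal C$ there is $Z\in L^q_{\mathcal G}(\mathcal F)$ with $E[ZX|\mathcal G]>E[Z\xi|\mathcal G]$ on $D_{\mathcal C}$ for all $\xi\in\mathcal C$. *)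

theory Defs
  imports "HOL-Probability.Probability"
begin

definition is_cond_ess_sup :: "'a measure \<Rightarrow> 'a measure \<Rightarrow> ('a \<Rightarrow> ereal) set \<Rightarrow> ('a \<Rightarrow> ereal) \<Rightarrow> bool" where
  "is_cond_ess_sup M G S f \<longleftrightarrow>
     f \<in> borel_measurable G \<and>
     (\<forall>g\<in>S. AE \<omega> in M. g \<omega> \<le> f \<omega>) \<and>
     (\<forall>h \<in> borel_measurable G. (\<forall>g\<in>S. AE \<omega> in M. g \<omega> \<le> h \<omega>) \<longrightarrow> (AE \<omega> in M. f \<omega> \<le> h \<omega>))"

definition is_cond_ess_inf :: "'a measure \<Rightarrow> 'a measure \<Rightarrow> ('a \<Rightarrow> ereal) set \<Rightarrow> ('a \<Rightarrow> ereal) \<Rightarrow> bool" where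
  "is_cond_ess_inf M G S f \<longleftrightarrow>
     f \<in> borel_measurable G \<and>
     (\<forall>g\<in>S. AE \<omega> in M. f \<omega> \<le> g \<omega>) \<and>
     (\<forall>h \<in> borel_measurable G. (\<forall>g\<in>S. AE \<omega> in M. h \<omega> \<le> g \<omega>) \<longrightarrow> (AE \<omega> in M. h \<omega> \<le> f \<omega>))"

definition cond_ess_sup :: "'a measure \<Rightarrow> 'a measure \<Rightarrow> ('a \<Rightarrow> ereal) set \<Rightarrow> ('a \<Rightarrow> ereal)" where
  "cond_ess_sup M G S = (SOME f. is_cond_ess_sup M G S f)"

definition cond_ess_inf :: "'a measure \<Rightarrow> 'a measure \<Rightarrow> ('a \<Rightarrow> ereal) set \<Rightarrow> ('a \<Rightarrow> ereal)" where
  "cond_ess_inf M G S = (SOME f. is_cond_ess_inf M G S f)"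

definition cexp :: "'a measure \<Rightarrow> 'a measure \<Rightarrow> ('a \<Rightarrow> real) \<Rightarrow> ('a \<Rightarrow> ereal)" where
  "cexp M G X = (\<lambda>\<omega>. enn2ereal (nn_cond_exp M G (\<lambda>x. ennreal (X x)) \<omega>)
                     - enn2ereal (nn_cond_exp M G (\<lambda>x. ennreal (- X x)) \<omega>))"

definition LpG :: "'a measure \<Rightarrow> 'a measure \<Rightarrow> ereal \<Rightarrow> ('a \<Rightarrow> real) set" where
  "LpG M G p = {X \<in> borel_measurable M.
     (if p = \<infinity>
      then (AE \<omega> in M. cond_ess_inf M G
              {Y. Y \<in> borel_measurable G \<and> (AE x in M. ereal \<bar>X x\<bar> \<le> Y x)} \<omega> < \<infinity>)
      else (AE \<omega> in M. nn_cond_exp M G (\<lambda>x. ennreal (\<bar>X x\<bar> powr real_of_ereal p)) \<omega> < \<infinity>))}"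

definition conj_exp :: "ereal \<Rightarrow> ereal" where
  "conj_exp p = (if p = 1 then \<infinity> else if p = \<infinity> then 1 else p / (p - 1))"

definition PqG :: "'a measure \<Rightarrow> 'a measure \<Rightarrow> ereal \<Rightarrow> ('a \<Rightarrow> real) set" where
  "PqG M G q = {Z \<in> LpG M G q. (AE \<omega> in M. 0 \<le> Z \<omega>) \<and> (AE \<omega> in M. cexp M G Z \<omega> = 1)}"

definition well_defined_ae :: "'a measure \<Rightarrow> 'a measure \<Rightarrow> ereal \<Rightarrow> (('a \<Rightarrow> real) \<Rightarrow> ('a \<Rightarrow> real)) \<Rightarrow> bool" where
  "well_defined_ae M G p \<rho> \<longleftrightarrow>
     (\<forall>X\<in>LpG M G p. \<rho> X \<in> borel_measurable G) \<and>
     (\<forall>X\<in>LpG M G p. \<forall>Y\<in>LpG M G p. (AE \<omega> in M. X \<omega> = Y \<omega>) \<longrightarrow> (AE \<omega> in M. \<rho> X \<omega> = \<rho> Y \<omega>))"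

definition REG :: "'a measure \<Rightarrow> 'a measure \<Rightarrow> ereal \<Rightarrow> (('a \<Rightarrow> real) \<Rightarrow> ('a \<Rightarrow> real)) \<Rightarrow> bool" where
  "REG M G p \<rho> \<longleftrightarrow> (\<forall>X1\<in>LpG M G p. \<forall>X2\<in>LpG M G p. \<forall>A\<in>sets G.
     AE \<omega> in M. \<rho> (\<lambda>x. X1 x * indicator A x + X2 x * indicator (space M - A) x) \<omega>
               = \<rho> X1 \<omega> * indicator A \<omega> + \<rho> X2 \<omega> * indicator (space M - A) \<omega>)"

definition MON_dec :: "'a measure \<Rightarrow> 'a measure \<Rightarrow> ereal \<Rightarrow> (('a \<Rightarrow> real) \<Rightarrow> ('a \<Rightarrow> real)) \<Rightarrow> bool" where
  "MON_dec M G p \<rho> \<longleftrightarrow> (\<forall>X1\<in>LpG M G p. \<forall>X2\<in>LpG M G p.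
     (AE \<omega> in M. X2 \<omega> \<le> X1 \<omega>) \<longrightarrow> (AE \<omega> in M. \<rho> X1 \<omega> \<le> \<rho> X2 \<omega>))"

definition CAS :: "'a measure \<Rightarrow> 'a measure \<Rightarrow> ereal \<Rightarrow> (('a \<Rightarrow> real) \<Rightarrow> ('a \<Rightarrow> real)) \<Rightarrow> bool" where
  "CAS M G p \<rho> \<longleftrightarrow> (\<forall>X\<in>LpG M G p. \<forall>\<Lambda>::'a \<Rightarrow> real. \<Lambda> \<in> borel_measurable G \<longrightarrow>
     (AE \<omega> in M. \<rho> (\<lambda>x. X x + \<Lambda> x) \<omega> = \<rho> X \<omega> - \<Lambda> \<omega>))"

text \<open>A is a G-set on which C restricted to A equals L^p_G restricted to A\<close>
definition full_on :: "'a measure \<Rightarrow> 'a measure \<Rightarrow> ereal \<Rightarrow> ('a \<Rightarrow> real) set \<Rightarrow> 'a set \<Rightarrow> bool" where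
  "full_on M G p C A \<longleftrightarrow> A \<in> sets G \<and>
     (\<forall>X\<in>LpG M G p. \<exists>\<xi>\<in>C. AE \<omega> in M. \<omega> \<in> A \<longrightarrow> X \<omega> = \<xi> \<omega>)"

definition is_A_C :: "'a measure \<Rightarrow> 'a measure \<Rightarrow> ereal \<Rightarrow> ('a \<Rightarrow> real) set \<Rightarrow> 'a set \<Rightarrow> bool" where
  "is_A_C M G p C A \<longleftrightarrow> full_on M G p C A \<and>
     (\<forall>B. full_on M G p C B \<longrightarrow> (AE \<omega> in M. \<omega> \<in> B \<longrightarrow> \<omega> \<in> A))"

definition outside :: "'a measure \<Rightarrow> 'a measure \<Rightarrow> ('a \<Rightarrow> real) set \<Rightarrow> 'a set \<Rightarrow> ('a \<Rightarrow> real) \<Rightarrow> bool" where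
  "outside M G C D X \<longleftrightarrow> \<not> (\<exists>A\<in>sets G. A \<subseteq> D \<and> measure M A > 0 \<and>
     (\<exists>\<xi>\<in>C. AE \<omega> in M. \<omega> \<in> A \<longrightarrow> X \<omega> = \<xi> \<omega>))"

definition cond_evenly_convex :: "'a measure \<Rightarrow> 'a measure \<Rightarrow> ereal \<Rightarrow> ('a \<Rightarrow> real) set \<Rightarrow> bool" where
  "cond_evenly_convex M G p C \<longleftrightarrow>
     (\<forall>(A :: nat \<Rightarrow> 'a set) (X :: nat \<Rightarrow> 'a \<Rightarrow> real).
        (\<forall>n. A n \<in> sets G) \<and> disjoint_family A \<and> (\<Union>n. A n) = space M \<and> (\<forall>n. X n \<in> C)
        \<longrightarrow> (\<lambda>\<omega>. \<Sum>n. indicator (A n) \<omega> * X n \<omega>) \<in> C) \<and>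
     (\<forall>AC. is_A_C M G p C AC \<longrightarrow>
        (\<forall>X\<in>LpG M G p. outside M G C (space M - AC) X \<longrightarrow>
          (\<exists>Z\<in>LpG M G (conj_exp p). \<forall>\<xi>\<in>C.
             AE \<omega> in M. \<omega> \<in> space M - AC \<longrightarrow>
               cexp M G (\<lambda>x. Z x * X x) \<omega> > cexp M G (\<lambda>x. Z x * \<xi> x) \<omega>)))"

definition EVQ :: "'a measure \<Rightarrow> 'a measure \<Rightarrow> ereal \<Rightarrow> (('a \<Rightarrow> real) \<Rightarrow> ('a \<Rightarrow> real)) \<Rightarrow> bool" where
  "EVQ M G p \<rho> \<longleftrightarrow> (\<forall>Y::'a \<Rightarrow> real. Y \<in> borel_measurable G \<longrightarrow>
     cond_evenly_convex M G p {\<xi> \<in> LpG M G p. AE \<omega> in M. \<rho> \<xi> \<omega> \<le> Y \<omega>})"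

text \<open>rho^*(-Q) for Q with density Z\<close>
definition rho_star :: "'a measure \<Rightarrow> 'a measure \<Rightarrow> ereal \<Rightarrow> (('a \<Rightarrow> real) \<Rightarrow> ('a \<Rightarrow> real)) \<Rightarrow> ('a \<Rightarrow> real) \<Rightarrow> ('a \<Rightarrow> ereal)" where
  "rho_star M G p \<rho> Z = cond_ess_sup M G
     ((\<lambda>\<xi>. \<lambda>\<omega>. cexp M G (\<lambda>x. Z x * - \<xi> x) \<omega> - ereal (\<rho> \<xi> \<omega>)) ` LpG M G p)"

definition R_fun :: "'a measure \<Rightarrow> 'a measure \<Rightarrow> ereal \<Rightarrow> (('a \<Rightarrow> real) \<Rightarrow> ('a \<Rightarrow> real)) \<Rightarrow> ('a \<Rightarrow> ereal) \<Rightarrow> ('a \<Rightarrow> real) \<Rightarrow> ('a \<Rightarrow> ereal)" where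
  "R_fun M G p \<rho> Y Z = cond_ess_inf M G
     ((\<lambda>\<xi>. \<lambda>\<omega>. ereal (\<rho> \<xi> \<omega>)) `
        {\<xi> \<in> LpG M G p. AE \<omega> in M. cexp M G (\<lambda>x. Z x * - \<xi> x) \<omega> = Y \<omega>})"

end

theory Submission
  imports Defs
begin


definition phi :: "ereal \<Rightarrow> real" where
  "phi x = arctan (real_of_ereal x) + (if x = \<infinity> then 2 else 0) - (if x = -\<infinity> then 2 else 0)"

lemma arctan_lt2: "\<bar>arctan y\<bar> < 2"
proof -
  have "\<bar>arctan y\<bar> < pi/2" using arctan_bounded[of y] by auto
  also have "pi/2 < 2" using pi_less_4 by simp
  finally show ?thesis .
qed

lemma phi_bounds: "\<bar>phi x\<bar> \<le> 4"
  using arctan_lt2[of "real_of_ereal x"] unfolding phi_def by (cases x) auto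

lemma phi_strict: "x < y \<Longrightarrow> phi x < phi y"
proof (cases x; cases y)
  fix r s assume "x < y" "x = ereal r" "y = ereal s"
  then show ?thesis by (simp add: phi_def arctan_less_iff)
next
  fix r assume "x < y" "x = ereal r" "y = \<infinity>"
  then show ?thesis using arctan_lt2[of r] by (simp add: phi_def)
next
  fix s assume "x < y" "x = -\<infinity>" "y = ereal s"
  then show ?thesis using arctan_lt2[of s] by (simp add: phi_def)
qed (auto simp: phi_def)

lemma phi_mono: "x \<le> y \<Longrightarrow> phi x \<le> phi y"
  using phi_strict[of x y] by (cases "x = y") (auto simp: order.order_iff_strict)

lemma phi_lo: "-4 \<le> phi x" using phi_bounds[of x] by linarith

lemma phi_inj: "phi x = phi y \<Longrightarrow> x = y"
  using phi_strict[of x y] phi_strict[of y x] by (cases x y rule: linorder_cases) auto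

lemma phi_meas[measurable]: assumes [measurable]: "u \<in> borel_measurable N" shows "(\<lambda>\<omega>. phi (u \<omega>)) \<in> borel_measurable N"
  unfolding phi_def by measurable

lemma ess_min_exists:
  fixes U :: "('a \<Rightarrow> ereal) set"
  assumes P: "prob_space M" and sub: "subalgebra M G"
  and ne: "U \<noteq> {}" and meas: "U \<subseteq> borel_measurable G"
  and closed: "\<And>u. (\<forall>n::nat. u n \<in> U) \<Longrightarrow> (\<lambda>\<omega>. INF n. u n \<omega>) \<in> U"
  shows "\<exists>u\<in>U. \<forall>v\<in>U. AE \<omega> in M. u \<omega> \<le> v \<omega>"
proof -
  interpret prob_space M by (rule P)
  have measM: "u \<in> borel_measurable M" if "u \<in> U" for u
    using meas that measurable_from_subalg[OF sub] by blast
  define I where "I u = (\<integral>\<omega>. phi (u \<omega>) \<partial>M)" for u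
  have intg: "integrable M (\<lambda>\<omega>. phi (u \<omega>))" if "u \<in> borel_measurable M" for u
    by (rule integrable_const_bound[where B=4]) (use phi_bounds that in auto)
  have Ilow: "-4 \<le> I u" if "u \<in> U" for u
  proof -
    have "(\<integral>\<omega>. -4 \<partial>M) \<le> I u" unfolding I_def
      by (rule integral_mono) (use intg measM[OF that] phi_lo in \<open>auto\<close>)
    then show ?thesis by (simp add: prob_space)
  qed
  have Imono: "I u \<le> I v" if "u \<in> borel_measurable M" "v \<in> borel_measurable M" "\<And>\<omega>. u \<omega> \<le> v \<omega>" for u v
    unfolding I_def by (rule integral_mono) (use intg that phi_mono in auto)
  define c where "c = Inf (I ` U)"
  have bdd: "bdd_below (I ` U)" using Ilow by (auto intro: bdd_belowI[where m="-4"])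
  have cle: "c \<le> I u" if "u \<in> U" for u unfolding c_def using bdd that by (auto intro: cInf_lower)
  have "\<exists>u\<in>U. I u < c + 1 / (real n + 1)" for n
  proof -
    have "Inf (I ` U) < c + 1 / (real n + 1)" unfolding c_def by simp
    then obtain y where "y \<in> I ` U" "y < c + 1 / (real n + 1)"
      using cInf_lessD[of "I ` U"] ne by blast
    then show ?thesis by auto
  qed
  then obtain un where un: "\<And>n. un n \<in> U" "\<And>n. I (un n) < c + 1 / (real n + 1)" by metis
  define u where "u = (\<lambda>\<omega>. INF n. un n \<omega>)"
  have uU: "u \<in> U" unfolding u_def using closed un by blast
  have Iu: "I u \<le> c + 1 / (real n + 1)" for n
  proof -
    have "I u \<le> I (un n)"
      by (rule Imono) (use measM uU un in \<open>auto simp: u_def intro: INF_lower\<close>)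
    then show ?thesis using un(2)[of n] by simp
  qed
  have Iuc: "I u = c"
  proof (rule ccontr)
    assume "I u \<noteq> c"
    then have "I u > c" using cle[OF uU] by simp
    then obtain n where "1 / (real n + 1) < I u - c"
      by (metis add.commute diff_gt_0_iff_gt nat_approx_posE of_nat_Suc)
    then show False using Iu[of n] by simp
  qed
  show ?thesis
  proof (intro bexI[OF _ uU] ballI)
    fix v assume vU: "v \<in> U"
    define w where "w = (\<lambda>\<omega>. INF n::nat. (if n = 0 then u else v) \<omega>)"
    have wU: "w \<in> U" unfolding w_def by (rule closed) (use uU vU in auto)
    have wmin: "w \<omega> = min (u \<omega>) (v \<omega>)" for \<omega>
    proof -
      have "range (\<lambda>n::nat. (if n = 0 then u else v) \<omega>) = {u \<omega>, v \<omega>}"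
        by (auto simp: image_def intro: exI[of _ 0] exI[of _ 1])
      then show ?thesis unfolding w_def by (simp add: inf_min)
    qed
    have "I w \<le> I u" by (rule Imono) (use measM wU uU wmin in auto)
    with cle[OF wU] Iuc have "I u - I w = 0" by simp
    then have "(\<integral>\<omega>. phi (u \<omega>) - phi (w \<omega>) \<partial>M) = 0"
      unfolding I_def using intg measM uU wU by simp
    then have "AE \<omega> in M. phi (u \<omega>) - phi (w \<omega>) = 0"
      by (subst (asm) integral_nonneg_eq_0_iff_AE) (use intg measM uU vU wU wmin phi_mono in \<open>auto\<close>)
    then show "AE \<omega> in M. u \<omega> \<le> v \<omega>"
      by eventually_elim (use phi_inj wmin in \<open>metis eq_iff_diff_eq_0 min.absorb_iff1\<close>)
  qed
qed

lemma cond_ess_sup_ex: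
  assumes P: "prob_space M" and sub: "subalgebra M G"
  shows "is_cond_ess_sup M G S (cond_ess_sup M G S)"
proof -
  define U where "U = {h \<in> borel_measurable G. \<forall>g\<in>S. AE \<omega> in M. g \<omega> \<le> h \<omega>}"
  have "(\<lambda>_. \<infinity>) \<in> U" unfolding U_def by auto
  moreover have "(\<lambda>\<omega>. INF n. u n \<omega>) \<in> U" if "\<forall>n::nat. u n \<in> U" for u
  proof -
    have [measurable]: "\<And>n. u n \<in> borel_measurable G" using that unfolding U_def by auto
    have "AE \<omega> in M. g \<omega> \<le> (INF n. u n \<omega>)" if "g \<in> S" for g
    proof -
      have "\<forall>n. AE \<omega> in M. g \<omega> \<le> u n \<omega>" using \<open>\<forall>n. u n \<in> U\<close> \<open>g \<in> S\<close> unfolding U_def by auto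
      then have "AE \<omega> in M. \<forall>n. g \<omega> \<le> u n \<omega>" by (simp add: AE_all_countable)
      then show ?thesis by eventually_elim (auto intro: INF_greatest)
    qed
    then show ?thesis unfolding U_def by auto
  qed
  ultimately obtain u where "u \<in> U" "\<forall>v\<in>U. AE \<omega> in M. u \<omega> \<le> v \<omega>"
    using ess_min_exists[OF P sub, of U] unfolding U_def by blast
  then have "is_cond_ess_sup M G S u" unfolding is_cond_ess_sup_def U_def by auto
  then show ?thesis unfolding cond_ess_sup_def by (rule someI[where P="is_cond_ess_sup M G S"])
qed

lemma cond_ess_inf_ex:
  assumes P: "prob_space M" and sub: "subalgebra M G"
  shows "is_cond_ess_inf M G S (cond_ess_inf M G S)"
proof -
  define U where "U = {h \<in> borel_measurable G. \<forall>g\<in>S. AE \<omega> in M. - h \<omega> \<le> g \<omega>}"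
  have "(\<lambda>_. \<infinity>) \<in> U" unfolding U_def by auto
  moreover have "(\<lambda>\<omega>. INF n. u n \<omega>) \<in> U" if "\<forall>n::nat. u n \<in> U" for u
  proof -
    have [measurable]: "\<And>n. u n \<in> borel_measurable G" using that unfolding U_def by auto
    have "AE \<omega> in M. - (INF n. u n \<omega>) \<le> g \<omega>" if "g \<in> S" for g
    proof -
      have "\<forall>n. AE \<omega> in M. - u n \<omega> \<le> g \<omega>" using \<open>\<forall>n. u n \<in> U\<close> \<open>g \<in> S\<close> unfolding U_def by auto
      then have "AE \<omega> in M. \<forall>n. - u n \<omega> \<le> g \<omega>" by (simp add: AE_all_countable)
      then show ?thesis
        by eventually_elim (auto simp: ereal_SUP_uminus_eq[symmetric] intro: SUP_least)
    qed
    then show ?thesis unfolding U_def by auto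
  qed
  ultimately obtain u where uU: "u \<in> U" and umin: "\<forall>v\<in>U. AE \<omega> in M. u \<omega> \<le> v \<omega>"
    using ess_min_exists[OF P sub, of U] unfolding U_def by blast
  have "is_cond_ess_inf M G S (\<lambda>\<omega>. - u \<omega>)"
    unfolding is_cond_ess_inf_def
  proof (intro conjI ballI allI impI)
    show "(\<lambda>\<omega>. - u \<omega>) \<in> borel_measurable G" using uU unfolding U_def by auto
    show "AE \<omega> in M. - u \<omega> \<le> g \<omega>" if "g \<in> S" for g using uU that unfolding U_def by auto
    fix h assume h: "h \<in> borel_measurable G" "\<forall>g\<in>S. AE \<omega> in M. h \<omega> \<le> g \<omega>"
    then have "(\<lambda>\<omega>. - h \<omega>) \<in> U" unfolding U_def by auto
    with umin have "AE \<omega> in M. u \<omega> \<le> - h \<omega>" by auto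
    then show "AE \<omega> in M. h \<omega> \<le> - u \<omega>" by eventually_elim (metis ereal_minus_le_minus ereal_uminus_uminus)
  qed
  then show ?thesis unfolding cond_ess_inf_def by (rule someI[where P="is_cond_ess_inf M G S"])
qed



lemma enn2real_plus': "a < top \<Longrightarrow> b < top \<Longrightarrow> enn2real (a + b) = enn2real a + enn2real (b::ennreal)"
  by (cases a rule: ennreal_cases; cases b rule: ennreal_cases) (auto simp flip: ennreal_plus)

lemma enn_fin_diff: "a < top \<Longrightarrow> b < top \<Longrightarrow> enn2ereal a - enn2ereal b = ereal (enn2real a - enn2real b)"
  by (cases a rule: ennreal_cases; cases b rule: ennreal_cases) auto

lemma enn_fin_ereal: "a < top \<Longrightarrow> enn2ereal a = ereal (enn2real a)"
  by (cases a rule: ennreal_cases) auto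



locale PS = prob_space M for M :: "'a measure" + fixes G :: "'a measure"
  assumes sub: "subalgebra M G"

sublocale PS \<subseteq> FMS: finite_measure_subalgebra M G
  by unfold_locales (rule sub)

context PS begin

lemma measGM: "f \<in> borel_measurable G \<Longrightarrow> f \<in> borel_measurable M"
  by (rule measurable_from_subalg[OF sub])

lemma setsGM: "A \<in> sets G \<Longrightarrow> A \<in> sets M"
  using sub unfolding subalgebra_def by auto

lemma spaceG: "space G = space M" using sub unfolding subalgebra_def by auto

definition cfin :: "('a \<Rightarrow> real) \<Rightarrow> bool" where
  "cfin W \<longleftrightarrow> W \<in> borel_measurable M \<and> (AE x in M. nn_cond_exp M G (\<lambda>x. ennreal \<bar>W x\<bar>) x < top)"

lemma cexp_measG[measurable]: "cexp M G W \<in> borel_measurable G"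
  unfolding cexp_def by measurable

lemma cexp_measM[measurable]: "cexp M G W \<in> borel_measurable M"
  by (rule measGM) (rule cexp_measG)

lemma nn_ce_const: "c \<in> borel_measurable G \<Longrightarrow> AE x in M. nn_cond_exp M G c x = c x"
  using FMS.nn_cond_exp_F_meas[of c] by auto

lemma nn_ce_mono_le:
  assumes "\<And>x. x \<in> space M \<Longrightarrow> f x \<le> g x" "f \<in> borel_measurable M" "g \<in> borel_measurable M"
  shows "AE x in M. nn_cond_exp M G f x \<le> nn_cond_exp M G g x"
  by (rule FMS.nn_cond_exp_mono) (use assms in auto)

lemma nn_ce_eq:
  assumes "\<And>x. x \<in> space M \<Longrightarrow> f x = g x" "f \<in> borel_measurable M" "g \<in> borel_measurable M"
  shows "AE x in M. nn_cond_exp M G f x = nn_cond_exp M G g x"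
  by (rule FMS.nn_cond_exp_cong) (use assms in auto)

lemma cfin_parts:
  assumes "cfin W"
  shows "AE x in M. nn_cond_exp M G (\<lambda>x. ennreal (W x)) x < top \<and> nn_cond_exp M G (\<lambda>x. ennreal (- W x)) x < top"
proof -
  have [measurable]: "W \<in> borel_measurable M" using assms unfolding cfin_def by auto
  have "AE x in M. nn_cond_exp M G (\<lambda>x. ennreal (W x)) x \<le> nn_cond_exp M G (\<lambda>x. ennreal \<bar>W x\<bar>) x"
    by (rule nn_ce_mono_le) (auto intro: ennreal_leI)
  moreover have "AE x in M. nn_cond_exp M G (\<lambda>x. ennreal (- W x)) x \<le> nn_cond_exp M G (\<lambda>x. ennreal \<bar>W x\<bar>) x"
    by (rule nn_ce_mono_le) (auto intro: ennreal_leI)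
  moreover have "AE x in M. nn_cond_exp M G (\<lambda>x. ennreal \<bar>W x\<bar>) x < top" using assms unfolding cfin_def by auto
  ultimately show ?thesis by eventually_elim (auto dest: le_less_trans)
qed

lemma cexp_real:
  assumes "cfin W"
  shows "AE x in M. cexp M G W x = ereal (enn2real (nn_cond_exp M G (\<lambda>x. ennreal (W x)) x)
                                        - enn2real (nn_cond_exp M G (\<lambda>x. ennreal (- W x)) x))"
  using cfin_parts[OF assms] by eventually_elim (simp add: cexp_def enn_fin_diff)

lemma cexp_finite:
  assumes "cfin W"
  shows "AE x in M. cexp M G W x = ereal (real_of_ereal (cexp M G W x))"
  using cexp_real[OF assms] by eventually_elim simp

lemma ennreal_split_aux:
  assumes "w = u - v" "0 \<le> u" "0 \<le> (v::real)"
  shows "ennreal w + ennreal v = ennreal (- w) + ennreal u"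
proof (cases "0 \<le> w")
  case True
  then show ?thesis using assms by (simp add: ennreal_neg flip: ennreal_plus)
next
  case False
  then show ?thesis using assms by (simp add: ennreal_neg flip: ennreal_plus)
qed

lemma aux_dec: "a + v = b + u \<Longrightarrow> a < top \<Longrightarrow> b < top \<Longrightarrow> u < top \<Longrightarrow> v < top \<Longrightarrow>
   enn2real a - enn2real b = enn2real u - enn2real (v::ennreal)"
proof -
  assume h: "a + v = b + u" "a < top" "b < top" "u < top" "v < top"
  then have "enn2real (a + v) = enn2real (b + u)" by simp
  then have "enn2real a + enn2real v = enn2real b + enn2real u" using h enn2real_plus'[of a v] enn2real_plus'[of b u] by simp
  then show ?thesis by simp
qed

lemma cexp_decomp:
  assumes [measurable]: "U \<in> borel_measurable M" "V \<in> borel_measurable M"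
    and nn: "\<And>x. x \<in> space M \<Longrightarrow> 0 \<le> U x" "\<And>x. x \<in> space M \<Longrightarrow> 0 \<le> V x"
    and fU: "AE x in M. nn_cond_exp M G (\<lambda>x. ennreal (U x)) x < top"
    and fV: "AE x in M. nn_cond_exp M G (\<lambda>x. ennreal (V x)) x < top"
    and W: "\<And>x. x \<in> space M \<Longrightarrow> W x = U x - V x"
  shows "cfin W \<and> (AE x in M. cexp M G W x = ereal (enn2real (nn_cond_exp M G (\<lambda>x. ennreal (U x)) x)
                                        - enn2real (nn_cond_exp M G (\<lambda>x. ennreal (V x)) x)))"
proof -
  have [measurable]: "W \<in> borel_measurable M"
    by (rule measurable_cong[THEN iffD2, of _ _ "\<lambda>x. U x - V x"]) (use W in auto)
  have pw: "\<bar>W x\<bar> \<le> U x + V x" if "x \<in> space M" for x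
    using W[OF that] nn[OF that] by simp
  have "AE x in M. nn_cond_exp M G (\<lambda>x. ennreal \<bar>W x\<bar>) x \<le> nn_cond_exp M G (\<lambda>x. ennreal (U x) + ennreal (V x)) x"
    by (rule nn_ce_mono_le) (use pw nn in \<open>auto simp flip: ennreal_plus intro!: ennreal_leI\<close>)
  moreover have "AE x in M. nn_cond_exp M G (\<lambda>x. ennreal (U x)) x + nn_cond_exp M G (\<lambda>x. ennreal (V x)) x = nn_cond_exp M G (\<lambda>x. ennreal (U x) + ennreal (V x)) x"
    by (rule FMS.nn_cond_exp_sum) auto
  ultimately have "AE x in M. nn_cond_exp M G (\<lambda>x. ennreal \<bar>W x\<bar>) x < top"
    using fU fV by eventually_elim (metis ennreal_add_less_top le_less_trans)
  then have cf: "cfin W" unfolding cfin_def by auto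
  have "AE x in M. nn_cond_exp M G (\<lambda>x. ennreal (W x)) x + nn_cond_exp M G (\<lambda>x. ennreal (V x)) x = nn_cond_exp M G (\<lambda>x. ennreal (W x) + ennreal (V x)) x"
    by (rule FMS.nn_cond_exp_sum) auto
  moreover have "AE x in M. nn_cond_exp M G (\<lambda>x. ennreal (- W x)) x + nn_cond_exp M G (\<lambda>x. ennreal (U x)) x = nn_cond_exp M G (\<lambda>x. ennreal (- W x) + ennreal (U x)) x"
    by (rule FMS.nn_cond_exp_sum) auto
  moreover have "AE x in M. nn_cond_exp M G (\<lambda>x. ennreal (W x) + ennreal (V x)) x = nn_cond_exp M G (\<lambda>x. ennreal (- W x) + ennreal (U x)) x"
    by (rule nn_ce_eq) (use W nn ennreal_split_aux in auto)
  moreover note cfin_parts[OF cf] fU fV cexp_real[OF cf]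
  ultimately have "AE x in M. cexp M G W x = ereal (enn2real (nn_cond_exp M G (\<lambda>x. ennreal (U x)) x)
                                        - enn2real (nn_cond_exp M G (\<lambda>x. ennreal (V x)) x))"
    by eventually_elim (simp add: aux_dec)
  with cf show ?thesis by simp
qed

lemma ennreal_maxsum: "ennreal (max a 0 + max b 0) = ennreal a + ennreal b"
  by (subst ennreal_plus) auto

lemma ennreal_maxprod: "0 \<le> c \<Longrightarrow> 0 \<le> d \<Longrightarrow> ennreal (c * max w 0 + d * max (- w) 0) = ennreal c * ennreal w + ennreal d * ennreal (- w)"
proof -
  assume h: "0 \<le> c" "0 \<le> d"
  have "ennreal (c * max w 0) = ennreal c * ennreal w" using h by (simp add: ennreal_mult)
  moreover have "ennreal (d * max (- w) 0) = ennreal d * ennreal (- w)" using h by (simp add: ennreal_mult)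
  ultimately show ?thesis using h by (subst ennreal_plus) auto
qed

lemma enn_lin: "0 \<le> c \<Longrightarrow> 0 \<le> d \<Longrightarrow> a < top \<Longrightarrow> b < top \<Longrightarrow>
   enn2real (ennreal c * a + ennreal d * b) = c * enn2real a + d * enn2real b"
  by (cases a rule: ennreal_cases; cases b rule: ennreal_cases)
     (auto simp flip: ennreal_mult ennreal_plus)

lemma scal_key:
  assumes [measurable]: "c \<in> borel_measurable G" "d \<in> borel_measurable G" "W \<in> borel_measurable M"
    and nn: "\<And>x. 0 \<le> c x" "\<And>x. 0 \<le> d x"
  shows "AE x in M. nn_cond_exp M G (\<lambda>x. ennreal (c x * max (W x) 0 + d x * max (- W x) 0)) x
               = ennreal (c x) * nn_cond_exp M G (\<lambda>x. ennreal (W x)) x + ennreal (d x) * nn_cond_exp M G (\<lambda>x. ennreal (- W x)) x"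
proof -
  have [measurable]: "c \<in> borel_measurable M" "d \<in> borel_measurable M" by (auto intro: measGM)
  have "AE x in M. nn_cond_exp M G (\<lambda>x. ennreal (c x * max (W x) 0 + d x * max (- W x) 0)) x
      = nn_cond_exp M G (\<lambda>x. ennreal (c x) * ennreal (W x) + ennreal (d x) * ennreal (- W x)) x"
    apply (rule nn_ce_eq) apply (rule ennreal_maxprod[OF nn]) by auto
  moreover have "AE x in M. nn_cond_exp M G (\<lambda>x. ennreal (c x) * ennreal (W x)) x + nn_cond_exp M G (\<lambda>x. ennreal (d x) * ennreal (- W x)) x
      = nn_cond_exp M G (\<lambda>x. ennreal (c x) * ennreal (W x) + ennreal (d x) * ennreal (- W x)) x"
    by (rule FMS.nn_cond_exp_sum) auto
  moreover have "AE x in M. ennreal (c x) * nn_cond_exp M G (\<lambda>x. ennreal (W x)) x = nn_cond_exp M G (\<lambda>x. ennreal (c x) * ennreal (W x)) x"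
    by (rule FMS.nn_cond_exp_prod) auto
  moreover have "AE x in M. ennreal (d x) * nn_cond_exp M G (\<lambda>x. ennreal (- W x)) x = nn_cond_exp M G (\<lambda>x. ennreal (d x) * ennreal (- W x)) x"
    by (rule FMS.nn_cond_exp_prod) auto
  ultimately show ?thesis by eventually_elim simp
qed

lemma cfin_meas: "cfin W \<Longrightarrow> W \<in> borel_measurable M" unfolding cfin_def by auto

lemma cexp_add:
  assumes cU: "cfin U" and cV: "cfin V"
  shows "cfin (\<lambda>x. U x + V x) \<and> (AE x in M. cexp M G (\<lambda>x. U x + V x) x = cexp M G U x + cexp M G V x)"
proof -
  have [measurable]: "U \<in> borel_measurable M" "V \<in> borel_measurable M" using cU cV by (auto simp: cfin_def)
  define U' where "U' = (\<lambda>x. max (U x) 0 + max (V x) 0)"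
  define V' where "V' = (\<lambda>x. max (- U x) 0 + max (- V x) 0)"
  have [measurable]: "U' \<in> borel_measurable M" "V' \<in> borel_measurable M" unfolding U'_def V'_def by auto
  have eU: "AE x in M. nn_cond_exp M G (\<lambda>x. ennreal (U' x)) x = nn_cond_exp M G (\<lambda>x. ennreal (U x)) x + nn_cond_exp M G (\<lambda>x. ennreal (V x)) x"
  proof -
    have "AE x in M. nn_cond_exp M G (\<lambda>x. ennreal (U' x)) x = nn_cond_exp M G (\<lambda>x. ennreal (U x) + ennreal (V x)) x"
      by (rule nn_ce_eq) (auto simp: U'_def ennreal_maxsum)
    moreover have "AE x in M. nn_cond_exp M G (\<lambda>x. ennreal (U x)) x + nn_cond_exp M G (\<lambda>x. ennreal (V x)) x = nn_cond_exp M G (\<lambda>x. ennreal (U x) + ennreal (V x)) x"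
      by (rule FMS.nn_cond_exp_sum) auto
    ultimately show ?thesis by eventually_elim simp
  qed
  have eV: "AE x in M. nn_cond_exp M G (\<lambda>x. ennreal (V' x)) x = nn_cond_exp M G (\<lambda>x. ennreal (- U x)) x + nn_cond_exp M G (\<lambda>x. ennreal (- V x)) x"
  proof -
    have "AE x in M. nn_cond_exp M G (\<lambda>x. ennreal (V' x)) x = nn_cond_exp M G (\<lambda>x. ennreal (- U x) + ennreal (- V x)) x"
      by (rule nn_ce_eq) (auto simp: V'_def ennreal_maxsum)
    moreover have "AE x in M. nn_cond_exp M G (\<lambda>x. ennreal (- U x)) x + nn_cond_exp M G (\<lambda>x. ennreal (- V x)) x = nn_cond_exp M G (\<lambda>x. ennreal (- U x) + ennreal (- V x)) x"
      by (rule FMS.nn_cond_exp_sum) auto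
    ultimately show ?thesis by eventually_elim simp
  qed
  have fU': "AE x in M. nn_cond_exp M G (\<lambda>x. ennreal (U' x)) x < top"
    using eU cfin_parts[OF cU] cfin_parts[OF cV] by eventually_elim simp
  have fV': "AE x in M. nn_cond_exp M G (\<lambda>x. ennreal (V' x)) x < top"
    using eV cfin_parts[OF cU] cfin_parts[OF cV] by eventually_elim simp
  have D: "cfin (\<lambda>x. U x + V x) \<and> (AE x in M. cexp M G (\<lambda>x. U x + V x) x = ereal (enn2real (nn_cond_exp M G (\<lambda>x. ennreal (U' x)) x)
                                        - enn2real (nn_cond_exp M G (\<lambda>x. ennreal (V' x)) x)))"
    by (rule cexp_decomp) (use fU' fV' in \<open>auto simp: U'_def V'_def\<close>)
  have "AE x in M. cexp M G (\<lambda>x. U x + V x) x = cexp M G U x + cexp M G V x"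
    using conjunct2[OF D] eU eV cfin_parts[OF cU] cfin_parts[OF cV] cexp_real[OF cU] cexp_real[OF cV]
    by eventually_elim (simp add: enn2real_plus')
  with D show ?thesis by simp
qed

lemma cexp_scal:
  assumes cW: "cfin W" and l[measurable]: "l \<in> borel_measurable G"
  shows "cfin (\<lambda>x. l x * W x) \<and> (AE x in M. cexp M G (\<lambda>x. l x * W x) x = ereal (l x) * cexp M G W x)"
proof -
  have [measurable]: "W \<in> borel_measurable M" using cW by (auto simp: cfin_def)
  have [measurable]: "l \<in> borel_measurable M" by (rule measGM) (rule l)
  define lp where "lp = (\<lambda>x. max (l x) 0)"
  define lm where "lm = (\<lambda>x. max (- l x) 0)"
  have [measurable]: "lp \<in> borel_measurable G" "lm \<in> borel_measurable G" unfolding lp_def lm_def by auto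
  have [measurable]: "lp \<in> borel_measurable M" "lm \<in> borel_measurable M" unfolding lp_def lm_def by auto
  define a where "a = nn_cond_exp M G (\<lambda>x. ennreal (W x))"
  define b where "b = nn_cond_exp M G (\<lambda>x. ennreal (- W x))"
  have k1: "AE x in M. nn_cond_exp M G (\<lambda>x. ennreal (lp x * max (W x) 0 + lm x * max (- W x) 0)) x
               = ennreal (lp x) * a x + ennreal (lm x) * b x"
    unfolding a_def b_def by (rule scal_key) (auto simp: lp_def lm_def)
  have k2: "AE x in M. nn_cond_exp M G (\<lambda>x. ennreal (lp x * max (- W x) 0 + lm x * max (W x) 0)) x
               = ennreal (lp x) * b x + ennreal (lm x) * a x"
    unfolding a_def b_def using scal_key[of lp lm "\<lambda>x. - W x"] by (simp add: lp_def lm_def)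
  have fin: "AE x in M. a x < top \<and> b x < top" using cfin_parts[OF cW] unfolding a_def b_def .
  have f1: "AE x in M. nn_cond_exp M G (\<lambda>x. ennreal (lp x * max (W x) 0 + lm x * max (- W x) 0)) x < top"
    using k1 fin by eventually_elim (simp add: ennreal_mult_less_top)
  have f2: "AE x in M. nn_cond_exp M G (\<lambda>x. ennreal (lp x * max (- W x) 0 + lm x * max (W x) 0)) x < top"
    using k2 fin by eventually_elim (simp add: ennreal_mult_less_top)
  have D: "cfin (\<lambda>x. l x * W x) \<and> (AE x in M. cexp M G (\<lambda>x. l x * W x) x =
      ereal (enn2real (nn_cond_exp M G (\<lambda>x. ennreal (lp x * max (W x) 0 + lm x * max (- W x) 0)) x)
           - enn2real (nn_cond_exp M G (\<lambda>x. ennreal (lp x * max (- W x) 0 + lm x * max (W x) 0)) x)))"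
    by (rule cexp_decomp) (use f1 f2 in \<open>auto simp: lp_def lm_def max_def algebra_simps\<close>)
  have "AE x in M. cexp M G (\<lambda>x. l x * W x) x = ereal (l x) * cexp M G W x"
    using conjunct2[OF D] k1 k2 fin cexp_real[OF cW]
  proof eventually_elim
    case (elim x)
    have lx: "l x = lp x - lm x" unfolding lp_def lm_def by (simp add: max_def)
    have nn: "0 \<le> lp x" "0 \<le> lm x" unfolding lp_def lm_def by auto
    have "enn2real (ennreal (lp x) * a x + ennreal (lm x) * b x) = lp x * enn2real (a x) + lm x * enn2real (b x)"
      using elim nn by (simp add: enn_lin)
    moreover have "enn2real (ennreal (lp x) * b x + ennreal (lm x) * a x) = lp x * enn2real (b x) + lm x * enn2real (a x)"
      using elim nn by (simp add: enn_lin)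
    moreover have "(lp x * enn2real (a x) + lm x * enn2real (b x)) - (lp x * enn2real (b x) + lm x * enn2real (a x))
       = l x * (enn2real (a x) - enn2real (b x))" unfolding lx by (simp add: algebra_simps)
    ultimately show ?case using elim by (simp add: a_def[symmetric] b_def[symmetric])
  qed
  with D show ?thesis by simp
qed

lemma cexp_cong:
  assumes "AE x in M. W1 x = W2 x" "W1 \<in> borel_measurable M" "W2 \<in> borel_measurable M"
  shows "AE x in M. cexp M G W1 x = cexp M G W2 x"
proof -
  have [measurable]: "W1 \<in> borel_measurable M" "W2 \<in> borel_measurable M" by fact+
  have "AE x in M. nn_cond_exp M G (\<lambda>x. ennreal (W1 x)) x = nn_cond_exp M G (\<lambda>x. ennreal (W2 x)) x"
    by (rule FMS.nn_cond_exp_cong) (use assms(1) in auto)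
  moreover have "AE x in M. nn_cond_exp M G (\<lambda>x. ennreal (- W1 x)) x = nn_cond_exp M G (\<lambda>x. ennreal (- W2 x)) x"
    by (rule FMS.nn_cond_exp_cong) (use assms(1) in auto)
  ultimately show ?thesis by eventually_elim (simp add: cexp_def zero_ennreal.rep_eq)
qed

lemma cexp_eq_pw:
  assumes "\<And>x. x \<in> space M \<Longrightarrow> W1 x = W2 x" "W1 \<in> borel_measurable M" "W2 \<in> borel_measurable M"
  shows "AE x in M. cexp M G W1 x = cexp M G W2 x"
  by (rule cexp_cong) (use assms in auto)

lemma LpG_meas: "X \<in> LpG M G p \<Longrightarrow> X \<in> borel_measurable M"
  unfolding LpG_def by auto

lemma LpG_inf_bound:
  assumes "X \<in> LpG M G \<infinity>"
  obtains g where "g \<in> borel_measurable G" "\<And>x. 0 \<le> g x" "AE x in M. \<bar>X x\<bar> \<le> g x"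
proof -
  define S where "S = {Y. Y \<in> borel_measurable G \<and> (AE x in M. ereal \<bar>X x\<bar> \<le> Y x)}"
  have fin: "AE x in M. cond_ess_inf M G S x < \<infinity>" using assms unfolding LpG_def S_def by auto
  have "(\<lambda>_. \<infinity>) \<in> S" unfolding S_def by auto
  moreover have "(\<lambda>\<omega>. INF n. u n \<omega>) \<in> S" if "\<forall>n::nat. u n \<in> S" for u
  proof -
    have [measurable]: "\<And>n. u n \<in> borel_measurable G" using that unfolding S_def by auto
    have "\<forall>n. AE x in M. ereal \<bar>X x\<bar> \<le> u n x" using that unfolding S_def by auto
    then have "AE x in M. \<forall>n. ereal \<bar>X x\<bar> \<le> u n x" by (simp add: AE_all_countable)
    then have "AE x in M. ereal \<bar>X x\<bar> \<le> (INF n. u n x)" by eventually_elim (auto intro: INF_greatest)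
    then show ?thesis unfolding S_def by auto
  qed
  moreover have "S \<subseteq> borel_measurable G" unfolding S_def by auto
  ultimately obtain u where uS: "u \<in> S" and umin: "\<forall>v\<in>S. AE x in M. u x \<le> v x"
    using ess_min_exists[OF prob_space_axioms sub, of S] by blast
  have inf: "is_cond_ess_inf M G S (cond_ess_inf M G S)" by (rule cond_ess_inf_ex[OF prob_space_axioms sub])
  have [measurable]: "u \<in> borel_measurable G" using uS unfolding S_def by auto
  have "AE x in M. u x \<le> cond_ess_inf M G S x"
    using inf umin unfolding is_cond_ess_inf_def by auto
  moreover have "AE x in M. ereal \<bar>X x\<bar> \<le> u x" using uS unfolding S_def by auto
  ultimately have A: "AE x in M. ereal \<bar>X x\<bar> \<le> u x \<and> u x < \<infinity>" using fin by eventually_elim auto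
  define g where "g = (\<lambda>x. max (real_of_ereal (u x)) 0)"
  have "g \<in> borel_measurable G" unfolding g_def by measurable
  moreover have "\<And>x. 0 \<le> g x" unfolding g_def by auto
  moreover have "AE x in M. \<bar>X x\<bar> \<le> g x"
    using A proof eventually_elim
    case (elim x)
    then show ?case unfolding g_def by (cases "u x") auto
  qed
  ultimately show ?thesis by (rule that)
qed

lemma LpG_inf_intro:
  assumes [measurable]: "X \<in> borel_measurable M" and g[measurable]: "g \<in> borel_measurable G"
    and b: "AE x in M. \<bar>X x\<bar> \<le> g x"
  shows "X \<in> LpG M G \<infinity>"
proof -
  define S where "S = {Y. Y \<in> borel_measurable G \<and> (AE x in M. ereal \<bar>X x\<bar> \<le> Y x)}"
  have inf: "is_cond_ess_inf M G S (cond_ess_inf M G S)" by (rule cond_ess_inf_ex[OF prob_space_axioms sub])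
  have "(\<lambda>x. ereal (g x)) \<in> S" unfolding S_def using b by auto
  then have "AE x in M. cond_ess_inf M G S x \<le> ereal (g x)" using inf unfolding is_cond_ess_inf_def by auto
  then have "AE x in M. cond_ess_inf M G S x < \<infinity>" by eventually_elim (auto dest: le_less_trans)
  then show ?thesis unfolding LpG_def S_def by auto
qed

lemma LpG_fin_iff:
  assumes "p \<noteq> \<infinity>"
  shows "X \<in> LpG M G p \<longleftrightarrow> X \<in> borel_measurable M \<and>
     (AE x in M. nn_cond_exp M G (\<lambda>x. ennreal (\<bar>X x\<bar> powr real_of_ereal p)) x < \<infinity>)"
  using assms unfolding LpG_def by auto

lemma ce_le_fin:
  assumes "AE x in M. nn_cond_exp M G f x \<le> nn_cond_exp M G g x" "AE x in M. nn_cond_exp M G g x < top"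
  shows "AE x in M. nn_cond_exp M G f x < top"
  using assms by eventually_elim (auto dest: le_less_trans)

lemma ce_sum_fin:
  assumes [measurable]: "f \<in> borel_measurable M" "g \<in> borel_measurable M"
    and "AE x in M. nn_cond_exp M G f x < top" "AE x in M. nn_cond_exp M G g x < top"
  shows "AE x in M. nn_cond_exp M G (\<lambda>x. f x + g x) x < top"
  using FMS.nn_cond_exp_sum[OF assms(1,2)] assms(3,4) by eventually_elim (metis ennreal_add_less_top)

lemma ce_prod_fin:
  assumes [measurable]: "c \<in> borel_measurable G" "g \<in> borel_measurable M"
    and "\<And>x. c x < top" "AE x in M. nn_cond_exp M G g x < top"
  shows "AE x in M. nn_cond_exp M G (\<lambda>x. c x * g x) x < top"
  using FMS.nn_cond_exp_prod[OF assms(1,2)] assms(4) by eventually_elim (use assms(3) in \<open>metis ennreal_mult_less_top\<close>)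

lemma ce_G_fin:
  assumes [measurable]: "c \<in> borel_measurable G" and "\<And>x. c x < top"
  shows "AE x in M. nn_cond_exp M G c x < top"
  using nn_ce_const[OF assms(1)] by eventually_elim (use assms(2) in auto)

lemma cfin_LpG:
  assumes X: "X \<in> LpG M G r" and r: "1 \<le> r"
  shows "cfin X"
proof -
  have [measurable]: "X \<in> borel_measurable M" using X by (rule LpG_meas)
  show ?thesis
  proof (cases "r = \<infinity>")
    case True
    then obtain g where [measurable]: "g \<in> borel_measurable G" and "\<And>x. 0 \<le> g x" "AE x in M. \<bar>X x\<bar> \<le> g x"
      using LpG_inf_bound X by metis
    have [measurable]: "g \<in> borel_measurable M" by (rule measGM) simp
    have "AE x in M. nn_cond_exp M G (\<lambda>x. ennreal \<bar>X x\<bar>) x \<le> nn_cond_exp M G (\<lambda>x. ennreal (g x)) x"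
      by (rule FMS.nn_cond_exp_mono) (use \<open>AE x in M. \<bar>X x\<bar> \<le> g x\<close> in \<open>auto intro: ennreal_leI\<close>)
    moreover have "AE x in M. nn_cond_exp M G (\<lambda>x. ennreal (g x)) x < top"
      by (rule ce_G_fin) auto
    ultimately show ?thesis unfolding cfin_def by (auto intro: ce_le_fin)
  next
    case False
    define rr where "rr = real_of_ereal r"
    have rr: "1 \<le> rr" using r False unfolding rr_def by (cases r) auto
    have fin: "AE x in M. nn_cond_exp M G (\<lambda>x. ennreal (\<bar>X x\<bar> powr rr)) x < top"
      using X False unfolding LpG_def rr_def by auto
    have pw: "\<bar>y\<bar> \<le> 1 + \<bar>y\<bar> powr rr" for y :: real
    proof (cases "\<bar>y\<bar> \<le> 1")
      case False
      then have "\<bar>y\<bar> powr 1 \<le> \<bar>y\<bar> powr rr" using rr by (intro powr_mono) auto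
      then show ?thesis by simp
    qed (smt (verit) powr_ge_zero)
    have "AE x in M. nn_cond_exp M G (\<lambda>x. ennreal \<bar>X x\<bar>) x \<le> nn_cond_exp M G (\<lambda>x. ennreal 1 + ennreal (\<bar>X x\<bar> powr rr)) x"
    proof (rule nn_ce_mono_le)
      fix x show "ennreal \<bar>X x\<bar> \<le> ennreal 1 + ennreal (\<bar>X x\<bar> powr rr)"
        using ennreal_leI[OF pw[of "X x"]] by (subst ennreal_plus[symmetric]) auto
    qed auto
    moreover have "AE x in M. nn_cond_exp M G (\<lambda>x. ennreal 1 + ennreal (\<bar>X x\<bar> powr rr)) x < top"
      by (rule ce_sum_fin) (use fin ce_G_fin[of "\<lambda>_. ennreal 1"] in auto)
    ultimately show ?thesis unfolding cfin_def by (auto intro: ce_le_fin)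
  qed
qed

lemma cfin_bound_mult:
  assumes cW: "cfin W" and [measurable]: "V \<in> borel_measurable M" "g \<in> borel_measurable G"
    and b: "AE x in M. \<bar>V x\<bar> \<le> g x"
  shows "cfin (\<lambda>x. V x * W x)"
proof -
  have [measurable]: "W \<in> borel_measurable M" using cW by (rule cfin_meas)
  have [measurable]: "g \<in> borel_measurable M" by (rule measGM) simp
  have "AE x in M. nn_cond_exp M G (\<lambda>x. ennreal \<bar>V x * W x\<bar>) x \<le> nn_cond_exp M G (\<lambda>x. ennreal (g x) * ennreal \<bar>W x\<bar>) x"
  proof (rule FMS.nn_cond_exp_mono)
    show "AE x in M. ennreal \<bar>V x * W x\<bar> \<le> ennreal (g x) * ennreal \<bar>W x\<bar>"
      using b proof eventually_elim
      case (elim x)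
      then have "\<bar>V x * W x\<bar> \<le> g x * \<bar>W x\<bar>" by (simp add: abs_mult mult_right_mono)
      moreover have "0 \<le> g x" using elim by linarith
      ultimately show ?case by (simp add: ennreal_mult[symmetric] ennreal_leI)
    qed
  qed auto
  moreover have "AE x in M. nn_cond_exp M G (\<lambda>x. ennreal (g x) * ennreal \<bar>W x\<bar>) x < top"
    by (rule ce_prod_fin) (use cW in \<open>auto simp: cfin_def\<close>)
  ultimately show ?thesis unfolding cfin_def by (auto intro: ce_le_fin)
qed

lemma conj_exp_cases:
  assumes "1 \<le> p"
  obtains (one) "p = 1" "conj_exp p = \<infinity>"
    | (inf) "p = \<infinity>" "conj_exp p = 1"
    | (fin) r0 where "p = ereal r0" "1 < r0" "conj_exp p = ereal (r0 / (r0 - 1))"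
proof (cases p)
  case (real r)
  show ?thesis
  proof (cases "r = 1")
    case True then show ?thesis using real one by (simp add: conj_exp_def)
  next
    case False
    then have "1 < r" using assms real by auto
    have "ereal r - 1 = ereal (r - 1)" by (simp add: one_ereal_def)
    then show ?thesis using real fin[of r] False \<open>1 < r\<close> by (simp add: conj_exp_def)
  qed
next
  case PInf then show ?thesis using inf by (simp add: conj_exp_def)
next
  case MInf then show ?thesis using assms by simp
qed

lemma conj_exp_ge1: "1 \<le> p \<Longrightarrow> 1 \<le> conj_exp p"
  by (cases rule: conj_exp_cases[of p]) auto

lemma young2:
  fixes a b r0 :: real
  assumes "1 < r0" "a \<ge> 0" "b \<ge> 0"
  shows "a * b \<le> a powr r0 + b powr (r0 / (r0 - 1))"
proof -
  define q where "q = r0 / (r0 - 1)"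
  have pp: "r0 - 1 > 0" using assms(1) by simp
  have q1: "q > 1" unfolding q_def using pp by (simp add: less_divide_eq)
  have "1/q = (r0 - 1)/r0" unfolding q_def by simp
  then have q2: "1/r0 + 1/q = 1" using assms(1) by (simp add: diff_divide_distrib)
  note q = q1 q2
  have "a * b \<le> a powr r0 / r0 + b powr q / q" by (rule Youngs_inequality) (use assms q in auto)
  also have "\<dots> \<le> a powr r0 + b powr q"
  proof (intro add_mono)
    have dl: "0 \<le> (x::real) \<Longrightarrow> 1 \<le> c \<Longrightarrow> x / c \<le> x" for x c by (metis div_by_1 frac_le less_eq_real_def zero_less_one)
    show "a powr r0 / r0 \<le> a powr r0" using assms by (intro dl) auto
    show "b powr q / q \<le> b powr q" using q by (intro dl) auto
  qed
  finally show ?thesis unfolding q_def .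
qed

lemma cfin_prod:
  assumes X: "X \<in> LpG M G p" and Z: "Z \<in> LpG M G (conj_exp p)" and p: "1 \<le> p"
  shows "cfin (\<lambda>x. Z x * X x)"
proof -
  have [measurable]: "X \<in> borel_measurable M" "Z \<in> borel_measurable M" using X Z by (auto intro: LpG_meas)
  from p show ?thesis
  proof (cases rule: conj_exp_cases)
    case one
    have Zi: "Z \<in> LpG M G \<infinity>" using Z one by simp
    obtain g where "g \<in> borel_measurable G" "\<And>x. 0 \<le> g x" "AE x in M. \<bar>Z x\<bar> \<le> g x"
      using LpG_inf_bound[OF Zi] by blast
    then show ?thesis using cfin_LpG[OF X p] by (intro cfin_bound_mult) auto
  next
    case inf
    have Xi: "X \<in> LpG M G \<infinity>" using X inf by simp
    obtain g where "g \<in> borel_measurable G" "\<And>x. 0 \<le> g x" "AE x in M. \<bar>X x\<bar> \<le> g x"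
      using LpG_inf_bound[OF Xi] by blast
    moreover have "cfin Z" using cfin_LpG[OF Z conj_exp_ge1[OF p]] .
    ultimately have "cfin (\<lambda>x. X x * Z x)" by (intro cfin_bound_mult) auto
    then show ?thesis by (simp add: mult.commute)
  next
    case (fin r0)
    have fX: "AE x in M. nn_cond_exp M G (\<lambda>x. ennreal (\<bar>X x\<bar> powr r0)) x < top"
      using X fin unfolding LpG_def by auto
    have fZ: "AE x in M. nn_cond_exp M G (\<lambda>x. ennreal (\<bar>Z x\<bar> powr (r0 / (r0 - 1)))) x < top"
      using Z fin unfolding LpG_def by auto
    have "AE x in M. nn_cond_exp M G (\<lambda>x. ennreal \<bar>Z x * X x\<bar>) x \<le>
        nn_cond_exp M G (\<lambda>x. ennreal (\<bar>X x\<bar> powr r0) + ennreal (\<bar>Z x\<bar> powr (r0 / (r0 - 1)))) x"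
    proof (rule nn_ce_mono_le)
      fix x
      have yy: "\<bar>Z x * X x\<bar> \<le> \<bar>X x\<bar> powr r0 + \<bar>Z x\<bar> powr (r0 / (r0 - 1))"
        using young2[of r0 "\<bar>X x\<bar>" "\<bar>Z x\<bar>"] fin by (simp add: abs_mult mult.commute)
      then show "ennreal \<bar>Z x * X x\<bar> \<le> ennreal (\<bar>X x\<bar> powr r0) + ennreal (\<bar>Z x\<bar> powr (r0 / (r0 - 1)))"
        using ennreal_leI[OF yy] by (subst ennreal_plus[symmetric]) auto
    qed auto
    moreover have "AE x in M. nn_cond_exp M G (\<lambda>x. ennreal (\<bar>X x\<bar> powr r0) + ennreal (\<bar>Z x\<bar> powr (r0 / (r0 - 1)))) x < top"
      by (rule ce_sum_fin) (use fX fZ in auto)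
    ultimately show ?thesis unfolding cfin_def by (auto intro: ce_le_fin)
  qed
qed

lemma cfin_abs_cong:
  assumes "cfin W" "V \<in> borel_measurable M" "\<And>x. \<bar>V x\<bar> = \<bar>W x\<bar>"
  shows "cfin V"
  using assms unfolding cfin_def by simp

lemma powr_sum_bound:
  fixes a b k r :: real
  assumes "\<bar>b\<bar> \<le> k" "0 < r"
  shows "\<bar>a + b\<bar> powr r \<le> 2 powr r * (\<bar>a\<bar> powr r + k powr r)"
proof -
  define m where "m = max \<bar>a\<bar> k"
  have k0: "0 \<le> k" using assms(1) by linarith
  have "\<bar>a + b\<bar> \<le> 2 * m" unfolding m_def using assms(1) by (auto simp: max_def)
  then have "\<bar>a + b\<bar> powr r \<le> (2 * m) powr r" using assms(2) by (intro powr_mono2) auto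
  also have "\<dots> = 2 powr r * m powr r" using k0 unfolding m_def by (subst powr_mult) auto
  also have "m powr r \<le> \<bar>a\<bar> powr r + k powr r" unfolding m_def by (auto simp: max_def)
  then have "2 powr r * m powr r \<le> 2 powr r * (\<bar>a\<bar> powr r + k powr r)" by (intro mult_left_mono) auto
  finally show ?thesis .
qed

lemma LpG_add_bdd:
  assumes xi: "\<xi> \<in> LpG M G p" and p: "1 \<le> p" and [measurable]: "B \<in> borel_measurable M"
    and [measurable]: "K \<in> borel_measurable G" and bd: "\<And>x. x \<in> space M \<Longrightarrow> \<bar>B x\<bar> \<le> K x"
  shows "(\<lambda>x. \<xi> x + B x) \<in> LpG M G p"
proof -
  have [measurable]: "\<xi> \<in> borel_measurable M" using xi by (rule LpG_meas)
  have [measurable]: "K \<in> borel_measurable M" by (rule measGM) simp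
  show ?thesis
  proof (cases "p = \<infinity>")
    case True
    then obtain g where [measurable]: "g \<in> borel_measurable G" and gb: "AE x in M. \<bar>\<xi> x\<bar> \<le> g x"
      using LpG_inf_bound[of \<xi>] xi by auto
    have "AE x in M. \<bar>\<xi> x + B x\<bar> \<le> g x + K x"
      using gb AE_space by eventually_elim (use bd in \<open>auto intro: order_trans[OF abs_triangle_ineq] add_mono\<close>)
    then show ?thesis unfolding True by (intro LpG_inf_intro) auto
  next
    case False
    define r where "r = real_of_ereal p"
    have r: "1 \<le> r" using p False unfolding r_def by (cases p) auto
    have fin: "AE x in M. nn_cond_exp M G (\<lambda>x. ennreal (\<bar>\<xi> x\<bar> powr r)) x < top"
      using xi False unfolding LpG_def r_def by auto
    have "AE x in M. nn_cond_exp M G (\<lambda>x. ennreal (\<bar>\<xi> x + B x\<bar> powr r)) x \<le>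
        nn_cond_exp M G (\<lambda>x. ennreal (2 powr r) * (ennreal (\<bar>\<xi> x\<bar> powr r) + ennreal (K x powr r))) x"
    proof (rule nn_ce_mono_le)
      fix x assume x: "x \<in> space M"
      have K0: "0 \<le> K x" using bd[OF x] by linarith
      have "\<bar>\<xi> x + B x\<bar> powr r \<le> 2 powr r * (\<bar>\<xi> x\<bar> powr r + K x powr r)"
        using powr_sum_bound[OF bd[OF x], of r "\<xi> x"] r by simp
      then show "ennreal (\<bar>\<xi> x + B x\<bar> powr r) \<le> ennreal (2 powr r) * (ennreal (\<bar>\<xi> x\<bar> powr r) + ennreal (K x powr r))"
        by (subst ennreal_plus[symmetric], simp, simp, subst ennreal_mult[symmetric]) (auto intro: ennreal_leI)
    qed auto
    moreover have "AE x in M. nn_cond_exp M G (\<lambda>x. ennreal (2 powr r) * (ennreal (\<bar>\<xi> x\<bar> powr r) + ennreal (K x powr r))) x < top"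
    proof (rule ce_prod_fin)
      show "AE x in M. nn_cond_exp M G (\<lambda>x. ennreal (\<bar>\<xi> x\<bar> powr r) + ennreal (K x powr r)) x < top"
      proof (rule ce_sum_fin)
        show "AE x in M. nn_cond_exp M G (\<lambda>x. ennreal (K x powr r)) x < top"
          by (rule ce_G_fin) auto
      qed (use fin in auto)
    qed auto
    ultimately show ?thesis using False unfolding LpG_def r_def by (auto intro: ce_le_fin)
  qed
qed

lemma LpG_scale:
  assumes Z: "Z \<in> LpG M G p" and p: "1 \<le> p" and [measurable]: "c \<in> borel_measurable G"
  shows "(\<lambda>x. c x * Z x) \<in> LpG M G p"
proof -
  have [measurable]: "Z \<in> borel_measurable M" using Z by (rule LpG_meas)
  have [measurable]: "c \<in> borel_measurable M" by (rule measGM) simp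
  show ?thesis
  proof (cases "p = \<infinity>")
    case True
    then obtain g where [measurable]: "g \<in> borel_measurable G" and gb: "AE x in M. \<bar>Z x\<bar> \<le> g x"
      using LpG_inf_bound[of Z] Z by auto
    have "AE x in M. \<bar>c x * Z x\<bar> \<le> \<bar>c x\<bar> * g x"
      using gb by eventually_elim (auto simp: abs_mult intro: mult_left_mono)
    then show ?thesis unfolding True by (intro LpG_inf_intro) auto
  next
    case False
    define r where "r = real_of_ereal p"
    have r: "1 \<le> r" using p False unfolding r_def by (cases p) auto
    have fin: "AE x in M. nn_cond_exp M G (\<lambda>x. ennreal (\<bar>Z x\<bar> powr r)) x < top"
      using Z False unfolding LpG_def r_def by auto
    have "AE x in M. nn_cond_exp M G (\<lambda>x. ennreal (\<bar>c x * Z x\<bar> powr r)) x =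
        nn_cond_exp M G (\<lambda>x. ennreal (\<bar>c x\<bar> powr r) * ennreal (\<bar>Z x\<bar> powr r)) x"
      by (rule nn_ce_eq) (auto simp: abs_mult powr_mult ennreal_mult)
    moreover have "AE x in M. nn_cond_exp M G (\<lambda>x. ennreal (\<bar>c x\<bar> powr r) * ennreal (\<bar>Z x\<bar> powr r)) x < top"
      by (rule ce_prod_fin) (use fin in auto)
    ultimately show ?thesis using False unfolding LpG_def r_def by auto
  qed
qed

lemma LpG_cong:
  assumes X: "X \<in> LpG M G p" and [measurable]: "W \<in> borel_measurable M" and eq: "AE x in M. W x = X x"
  shows "W \<in> LpG M G p"
proof -
  have [measurable]: "X \<in> borel_measurable M" using X by (rule LpG_meas)
  show ?thesis
  proof (cases "p = \<infinity>")
    case True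
    then obtain g where [measurable]: "g \<in> borel_measurable G" and gb: "AE x in M. \<bar>X x\<bar> \<le> g x"
      using LpG_inf_bound[of X] X by auto
    have "AE x in M. \<bar>W x\<bar> \<le> g x" using gb eq by eventually_elim auto
    then show ?thesis unfolding True by (intro LpG_inf_intro) auto
  next
    case False
    have "AE x in M. nn_cond_exp M G (\<lambda>x. ennreal (\<bar>W x\<bar> powr real_of_ereal p)) x = nn_cond_exp M G (\<lambda>x. ennreal (\<bar>X x\<bar> powr real_of_ereal p)) x"
      by (rule FMS.nn_cond_exp_cong) (use eq in auto)
    then show ?thesis using X False unfolding LpG_def by auto
  qed
qed

lemma LpG_zero:
  assumes "1 \<le> p"
  shows "(\<lambda>_. 0) \<in> LpG M G p"
proof (cases "p = \<infinity>")
  case True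
  show ?thesis unfolding True by (rule LpG_inf_intro[where g="\<lambda>_. 0"]) auto
next
  case False
  define r where "r = real_of_ereal p"
  have "AE x in M. nn_cond_exp M G (\<lambda>x. ennreal (\<bar>0::real\<bar> powr r)) x < top"
    by (rule ce_G_fin) auto
  then show ?thesis using False unfolding LpG_def r_def by auto
qed

lemma LpG_add_G:
  assumes xi: "\<xi> \<in> LpG M G p" and p: "1 \<le> p" and [measurable]: "L \<in> borel_measurable G"
  shows "(\<lambda>x. \<xi> x + L x) \<in> LpG M G p"
proof -
  have [measurable]: "L \<in> borel_measurable M" by (rule measGM) simp
  show ?thesis by (rule LpG_add_bdd[OF xi p, of L "\<lambda>x. \<bar>L x\<bar>"]) auto
qed

lemma cexp_shift:
  assumes c1: "cfin (\<lambda>x. Z x * - \<eta> x)" and c2: "cfin Z" and [measurable]: "L \<in> borel_measurable G"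
    and [measurable]: "\<eta> \<in> borel_measurable M"
  shows "AE x in M. cexp M G (\<lambda>x. Z x * - (\<eta> x + L x)) x = cexp M G (\<lambda>x. Z x * - \<eta> x) x - ereal (L x) * cexp M G Z x"
proof -
  have [measurable]: "Z \<in> borel_measurable M" using c2 by (rule cfin_meas)
  have [measurable]: "L \<in> borel_measurable M" by (rule measGM) simp
  have S: "cfin (\<lambda>x. - L x * Z x) \<and> (AE x in M. cexp M G (\<lambda>x. - L x * Z x) x = ereal (- L x) * cexp M G Z x)"
    by (rule cexp_scal[OF c2]) simp
  have A: "cfin (\<lambda>x. Z x * - \<eta> x + - L x * Z x) \<and> (AE x in M. cexp M G (\<lambda>x. Z x * - \<eta> x + - L x * Z x) x = cexp M G (\<lambda>x. Z x * - \<eta> x) x + cexp M G (\<lambda>x. - L x * Z x) x)"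
    by (rule cexp_add[OF c1 conjunct1[OF S]])
  have B: "AE x in M. cexp M G (\<lambda>x. Z x * - (\<eta> x + L x)) x = cexp M G (\<lambda>x. Z x * - \<eta> x + - L x * Z x) x"
    by (rule cexp_eq_pw) (auto simp: algebra_simps)
  show ?thesis using conjunct2[OF A] conjunct2[OF S] B
  proof eventually_elim
    case (elim x)
    have "ereal (- L x) * cexp M G Z x = - (ereal (L x) * cexp M G Z x)" by (cases "cexp M G Z x") auto
    then show ?case using elim by (simp add: minus_ereal_def)
  qed
qed

lemma cexp_neg:
  assumes c: "cfin W"
  shows "AE x in M. cexp M G (\<lambda>x. - W x) x = - cexp M G W x"
proof -
  have [measurable]: "W \<in> borel_measurable M" using c by (rule cfin_meas)
  have S: "cfin (\<lambda>x. (\<lambda>_. -1) x * W x) \<and> (AE x in M. cexp M G (\<lambda>x. (\<lambda>_. -1) x * W x) x = ereal ((\<lambda>_. -1) x) * cexp M G W x)"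
    by (rule cexp_scal[OF c]) simp
  have "ereal (- 1) * c = - c" for c by (cases c) auto
  then show ?thesis using S by simp
qed

lemma nn_zero_imp:
  assumes [measurable]: "W \<in> borel_measurable M" and nn: "\<And>x. x \<in> space M \<Longrightarrow> 0 \<le> W x"
    and z: "AE x in M. nn_cond_exp M G (\<lambda>x. ennreal (W x)) x = 0"
  shows "AE x in M. W x = 0"
proof -
  have "(\<integral>\<^sup>+ x. (\<lambda>_. 1) x * nn_cond_exp M G (\<lambda>x. ennreal (W x)) x \<partial>M) = (\<integral>\<^sup>+ x. (\<lambda>_. 1) x * ennreal (W x) \<partial>M)"
    by (rule FMS.nn_cond_exp_intg) auto
  moreover have "(\<integral>\<^sup>+ x. nn_cond_exp M G (\<lambda>x. ennreal (W x)) x \<partial>M) = 0"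
    using z by (simp add: nn_integral_0_iff_AE)
  ultimately have "(\<integral>\<^sup>+ x. ennreal (W x) \<partial>M) = 0" by simp
  then have "AE x in M. ennreal (W x) = 0" by (simp add: nn_integral_0_iff_AE)
  then show ?thesis using AE_space by eventually_elim (metis nn antisym ennreal_eq_0_iff)
qed

lemma cexp_nonneg:
  assumes [measurable]: "W \<in> borel_measurable M" and nn: "\<And>x. x \<in> space M \<Longrightarrow> 0 \<le> W x"
  shows "AE x in M. cexp M G W x = enn2ereal (nn_cond_exp M G (\<lambda>x. ennreal (W x)) x)"
proof -
  have "AE x in M. nn_cond_exp M G (\<lambda>x. ennreal (- W x)) x = nn_cond_exp M G (\<lambda>x. 0) x"
    by (rule nn_ce_eq) (use nn in \<open>auto simp: ennreal_neg\<close>)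
  moreover have "AE x in M. nn_cond_exp M G (\<lambda>x. 0) x = 0" using nn_ce_const[of "\<lambda>_. 0"] by simp
  ultimately show ?thesis by eventually_elim (simp add: cexp_def zero_ennreal.rep_eq)
qed

end

lemma ess_inf_greatest: "is_cond_ess_inf M G S f \<Longrightarrow> h \<in> borel_measurable G \<Longrightarrow> \<forall>g\<in>S. AE x in M. h x \<le> g x \<Longrightarrow> AE x in M. h x \<le> f x"
  unfolding is_cond_ess_inf_def by auto
lemma ess_inf_lower: "is_cond_ess_inf M G S f \<Longrightarrow> g \<in> S \<Longrightarrow> AE x in M. f x \<le> g x"
  unfolding is_cond_ess_inf_def by auto
lemma ess_sup_least: "is_cond_ess_sup M G S f \<Longrightarrow> h \<in> borel_measurable G \<Longrightarrow> \<forall>g\<in>S. AE x in M. g x \<le> h x \<Longrightarrow> AE x in M. f x \<le> h x"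
  unfolding is_cond_ess_sup_def by auto
lemma ess_sup_upper: "is_cond_ess_sup M G S f \<Longrightarrow> g \<in> S \<Longrightarrow> AE x in M. g x \<le> f x"
  unfolding is_cond_ess_sup_def by auto

lemma H1: "ereal y - ereal r \<le> s \<Longrightarrow> ereal y - s \<le> ereal r"
  by (cases s) auto
lemma H2: "t \<le> ereal a \<Longrightarrow> ereal (y - a) \<le> ereal y - t"
  by (cases t) auto
lemma H3: "s \<le> ereal y - t \<Longrightarrow> t \<le> ereal y - s"
  by (cases s; cases t) auto

locale RM = PS M G for M :: "'a measure" and G +
  fixes p :: ereal and \<rho> :: "('a \<Rightarrow> real) \<Rightarrow> ('a \<Rightarrow> real)"
  assumes p1: "1 \<le> p" and wd: "well_defined_ae M G p \<rho>"
begin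

lemma rho_measG: "\<xi> \<in> LpG M G p \<Longrightarrow> \<rho> \<xi> \<in> borel_measurable G"
  using wd unfolding well_defined_ae_def by auto

lemma rho_measM: "\<xi> \<in> LpG M G p \<Longrightarrow> \<rho> \<xi> \<in> borel_measurable M"
  by (rule measGM) (rule rho_measG)

lemma rho_cong: "\<xi> \<in> LpG M G p \<Longrightarrow> \<eta> \<in> LpG M G p \<Longrightarrow> AE x in M. \<xi> x = \<eta> x \<Longrightarrow> AE x in M. \<rho> \<xi> x = \<rho> \<eta> x"
  using wd unfolding well_defined_ae_def by auto

lemma cfinF:
  assumes "Z \<in> LpG M G (conj_exp p)" "\<eta> \<in> LpG M G p"
  shows "cfin (\<lambda>x. Z x * - \<eta> x)"
proof -
  have [measurable]: "Z \<in> borel_measurable M" "\<eta> \<in> borel_measurable M" using assms by (auto intro: LpG_meas)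
  show ?thesis by (rule cfin_abs_cong[OF cfin_prod[OF assms(2,1) p1]]) (auto simp: abs_mult)
qed

lemma rho_star_prop:
  "is_cond_ess_sup M G ((\<lambda>\<xi>. \<lambda>\<omega>. cexp M G (\<lambda>x. Z x * - \<xi> x) \<omega> - ereal (\<rho> \<xi> \<omega>)) ` LpG M G p) (rho_star M G p \<rho> Z)"
  unfolding rho_star_def by (rule cond_ess_sup_ex[OF prob_space_axioms sub])

lemma rho_star_measG[measurable]: "rho_star M G p \<rho> Z \<in> borel_measurable G"
  using rho_star_prop unfolding is_cond_ess_sup_def by auto

lemma rho_star_ge:
  assumes "\<eta> \<in> LpG M G p"
  shows "AE \<omega> in M. cexp M G (\<lambda>x. Z x * - \<eta> x) \<omega> - ereal (\<rho> \<eta> \<omega>) \<le> rho_star M G p \<rho> Z \<omega>"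
  using rho_star_prop[of Z] assms unfolding is_cond_ess_sup_def by auto

lemma PqG_L: "Z \<in> PqG M G q \<Longrightarrow> Z \<in> LpG M G q" unfolding PqG_def by auto

lemma part1:
  assumes cas: "CAS M G p \<rho>" and Z: "Z \<in> PqG M G (conj_exp p)" and X: "X \<in> LpG M G p"
  shows "AE \<omega> in M. R_fun M G p \<rho> (cexp M G (\<lambda>x. Z x * - X x)) Z \<omega>
                 = cexp M G (\<lambda>x. Z x * - X x) \<omega> - rho_star M G p \<rho> Z \<omega>"
proof -
  have ZL: "Z \<in> LpG M G (conj_exp p)" using Z by (rule PqG_L)
  have cZ: "cfin Z" by (rule cfin_LpG[OF ZL conj_exp_ge1[OF p1]])
  have c1: "AE x in M. cexp M G Z x = 1" using Z unfolding PqG_def by auto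
  have [measurable]: "Z \<in> borel_measurable M" using ZL by (rule LpG_meas)
  define Y where "Y = cexp M G (\<lambda>x. Z x * - X x)"
  have [measurable]: "Y \<in> borel_measurable G" unfolding Y_def by simp
  define rs where "rs = rho_star M G p \<rho> Z"
  have [measurable]: "rs \<in> borel_measurable G" unfolding rs_def by simp
  define Rs where "Rs = (\<lambda>\<xi>. \<lambda>\<omega>. ereal (\<rho> \<xi> \<omega>)) ` {\<xi> \<in> LpG M G p. AE \<omega> in M. cexp M G (\<lambda>x. Z x * - \<xi> x) \<omega> = Y \<omega>}"
  define R where "R = R_fun M G p \<rho> Y Z"
  have RP: "is_cond_ess_inf M G Rs R" unfolding R_def R_fun_def Rs_def
    by (rule cond_ess_inf_ex[OF prob_space_axioms sub])
  have [measurable]: "R \<in> borel_measurable G" using RP unfolding is_cond_ess_inf_def by auto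
  have Yfin: "AE x in M. Y x = ereal (real_of_ereal (Y x))" unfolding Y_def
    by (rule cexp_finite[OF cfinF[OF ZL X]])
  have A: "AE \<omega> in M. Y \<omega> - rs \<omega> \<le> R \<omega>"
  proof -
    have "\<forall>g\<in>Rs. AE \<omega> in M. Y \<omega> - rs \<omega> \<le> g \<omega>"
    proof
      fix g assume "g \<in> Rs"
      then obtain \<xi> where xi: "\<xi> \<in> LpG M G p" "AE \<omega> in M. cexp M G (\<lambda>x. Z x * - \<xi> x) \<omega> = Y \<omega>"
        and g: "g = (\<lambda>\<omega>. ereal (\<rho> \<xi> \<omega>))" unfolding Rs_def by auto
      show "AE \<omega> in M. Y \<omega> - rs \<omega> \<le> g \<omega>"
        using rho_star_ge[OF xi(1), of Z] xi(2) Yfin unfolding g rs_def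
        by eventually_elim (metis H1)
    qed
    moreover have "(\<lambda>\<omega>. Y \<omega> - rs \<omega>) \<in> borel_measurable G" by measurable
    ultimately show ?thesis by (intro ess_inf_greatest[OF RP])
  qed
  have B: "AE \<omega> in M. rs \<omega> \<le> Y \<omega> - R \<omega>"
  proof -
    have "\<forall>g\<in>(\<lambda>\<xi>. \<lambda>\<omega>. cexp M G (\<lambda>x. Z x * - \<xi> x) \<omega> - ereal (\<rho> \<xi> \<omega>)) ` LpG M G p. AE \<omega> in M. g \<omega> \<le> Y \<omega> - R \<omega>"
    proof
      fix g assume "g \<in> (\<lambda>\<xi>. \<lambda>\<omega>. cexp M G (\<lambda>x. Z x * - \<xi> x) \<omega> - ereal (\<rho> \<xi> \<omega>)) ` LpG M G p"
      then obtain \<eta> where eta: "\<eta> \<in> LpG M G p" and g: "g = (\<lambda>\<omega>. cexp M G (\<lambda>x. Z x * - \<eta> x) \<omega> - ereal (\<rho> \<eta> \<omega>))"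
        by auto
      have [measurable]: "\<eta> \<in> borel_measurable M" using eta by (rule LpG_meas)
      define F where "F = cexp M G (\<lambda>x. Z x * - \<eta> x)"
      have [measurable]: "F \<in> borel_measurable G" unfolding F_def by simp
      have Ffin: "AE x in M. F x = ereal (real_of_ereal (F x))" unfolding F_def
        by (rule cexp_finite[OF cfinF[OF ZL eta]])
      define L where "L = (\<lambda>x. real_of_ereal (F x) - real_of_ereal (Y x))"
      have [measurable]: "L \<in> borel_measurable G" unfolding L_def by measurable
      define \<xi> where "\<xi> = (\<lambda>x. \<eta> x + L x)"
      have xi: "\<xi> \<in> LpG M G p" unfolding \<xi>_def by (rule LpG_add_G[OF eta p1]) simp
      have sh: "AE x in M. cexp M G (\<lambda>x. Z x * - (\<eta> x + L x)) x = F x - ereal (L x) * cexp M G Z x"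
        unfolding F_def by (rule cexp_shift[OF cfinF[OF ZL eta] cZ]) auto
      have "AE x in M. cexp M G (\<lambda>x. Z x * - \<xi> x) x = Y x"
        using sh c1 Ffin Yfin unfolding \<xi>_def
      proof eventually_elim
        case (elim x)
        obtain f y where fy: "F x = ereal f" "Y x = ereal y" using elim by metis
        show ?case using elim(1,2) fy unfolding L_def by simp
      qed
      then have "(\<lambda>\<omega>. ereal (\<rho> \<xi> \<omega>)) \<in> Rs" unfolding Rs_def using xi by auto
      then have Rle: "AE \<omega> in M. R \<omega> \<le> ereal (\<rho> \<xi> \<omega>)" using RP unfolding is_cond_ess_inf_def by auto
      have casx: "AE \<omega> in M. \<rho> \<xi> \<omega> = \<rho> \<eta> \<omega> - L \<omega>"
        using cas eta unfolding CAS_def \<xi>_def by auto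
      show "AE \<omega> in M. g \<omega> \<le> Y \<omega> - R \<omega>"
        using Rle casx Ffin Yfin unfolding g F_def[symmetric]
      proof eventually_elim
        case (elim x)
        obtain f y where fy: "F x = ereal f" "Y x = ereal y" using elim by metis
        have "R x \<le> ereal (\<rho> \<eta> x - (f - y))" using elim(1,2) fy unfolding L_def by simp
        from H2[OF this, of y] show ?case using fy by simp
      qed
    qed
    moreover have "(\<lambda>\<omega>. Y \<omega> - R \<omega>) \<in> borel_measurable G" by measurable
    ultimately show ?thesis unfolding rs_def by (intro ess_sup_least[OF rho_star_prop])
  qed
  have "AE \<omega> in M. R \<omega> = Y \<omega> - rs \<omega>"
    using A B Yfin by eventually_elim (metis H3 antisym)
  then show ?thesis unfolding R_def Y_def rs_def .
qed

end

context PS begin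

lemma cexp_zero: "AE x in M. cexp M G (\<lambda>_. 0) x = 0"
proof -
  have "AE x in M. nn_cond_exp M G (\<lambda>_. 0) x = 0" using nn_ce_const[of "\<lambda>_. 0"] by simp
  then show ?thesis by eventually_elim (simp add: cexp_def zero_ennreal.rep_eq)
qed

lemma cexp_local_zero:
  assumes cW: "cfin W" and B: "B \<in> sets G" and z: "AE x in M. x \<in> B \<longrightarrow> W x = 0"
  shows "AE x in M. x \<in> B \<longrightarrow> cexp M G W x = 0"
proof -
  have [measurable]: "W \<in> borel_measurable M" using cW by (rule cfin_meas)
  have [measurable]: "B \<in> sets G" "B \<in> sets M" using B setsGM by auto
  have S: "AE x in M. cexp M G (\<lambda>x. indicator B x * W x) x = ereal (indicator B x) * cexp M G W x"
    using cexp_scal[OF cW, of "indicator B"] by simp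
  have "AE x in M. cexp M G (\<lambda>x. indicator B x * W x) x = cexp M G (\<lambda>_. 0) x"
    by (rule cexp_cong) (use z in \<open>auto simp: indicator_def\<close>)
  then show ?thesis using S cexp_zero by eventually_elim (auto simp: indicator_def)
qed

end

context RM begin

lemma locality:
  assumes reg: "REG M G p \<rho>" and xi: "\<xi> \<in> LpG M G p" and X1: "X1 \<in> LpG M G p"
    and B: "B \<in> sets G" and eq: "AE \<omega> in M. \<omega> \<in> B \<longrightarrow> X1 \<omega> = \<xi> \<omega>"
  shows "AE \<omega> in M. \<omega> \<in> B \<longrightarrow> \<rho> \<xi> \<omega> = \<rho> X1 \<omega>"
proof -
  have [measurable]: "\<xi> \<in> borel_measurable M" "X1 \<in> borel_measurable M" using xi X1 by (auto intro: LpG_meas)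
  have [measurable]: "B \<in> sets M" using B setsGM by auto
  define W where "W = (\<lambda>x. \<xi> x * indicator B x + X1 x * indicator (space M - B) x)"
  have [measurable]: "W \<in> borel_measurable M" unfolding W_def by measurable
  have WX: "AE x in M. W x = X1 x" using eq AE_space by eventually_elim (auto simp: W_def indicator_def)
  have WL: "W \<in> LpG M G p" by (rule LpG_cong[OF X1]) (use WX in auto)
  have "AE x in M. \<rho> W x = \<rho> X1 x" by (rule rho_cong[OF WL X1 WX])
  moreover have "AE x in M. \<rho> W x = \<rho> \<xi> x * indicator B x + \<rho> X1 x * indicator (space M - B) x"
    using reg xi X1 B unfolding REG_def W_def by auto
  ultimately show ?thesis by eventually_elim (auto simp: indicator_def)
qed

lemma cexp_pos_neg:
  assumes "Z \<in> LpG M G (conj_exp p)" "W \<in> LpG M G p"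
  shows "AE x in M. cexp M G (\<lambda>x. Z x * W x) x = - cexp M G (\<lambda>x. Z x * - W x) x"
  using cexp_neg[OF cfinF[OF assms]] by simp

lemma key:
  assumes reg: "REG M G p \<rho>" and mon: "MON_dec M G p \<rho>" and evq: "EVQ M G p \<rho>" and cas: "CAS M G p \<rho>"
    and X: "X \<in> LpG M G p" and eps: "0 < \<epsilon>"
  shows "\<exists>Z'\<in>PqG M G (conj_exp p). AE \<omega> in M. ereal (\<rho> X \<omega> - \<epsilon>) \<le> cexp M G (\<lambda>x. Z' x * - X x) \<omega> - rho_star M G p \<rho> Z' \<omega>"
proof -
  have [measurable]: "X \<in> borel_measurable M" using X by (rule LpG_meas)
  have [measurable]: "\<rho> X \<in> borel_measurable G" using X by (rule rho_measG)
  have [measurable]: "\<rho> X \<in> borel_measurable M" using X by (rule rho_measM)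
  have CAS': "AE \<omega> in M. \<rho> (\<lambda>x. \<xi> x + L x) \<omega> = \<rho> \<xi> \<omega> - L \<omega>" if "\<xi> \<in> LpG M G p" "L \<in> borel_measurable G" for \<xi> L
    using cas that unfolding CAS_def by auto
  define Y where "Y = (\<lambda>\<omega>. \<rho> X \<omega> - \<epsilon>)"
  have [measurable]: "Y \<in> borel_measurable G" unfolding Y_def by measurable
  define C where "C = {\<xi> \<in> LpG M G p. AE \<omega> in M. \<rho> \<xi> \<omega> \<le> Y \<omega>}"
  define \<xi>0 where "\<xi>0 = (\<lambda>x. X x + \<epsilon>)"
  have \<xi>0L: "\<xi>0 \<in> LpG M G p" unfolding \<xi>0_def using LpG_add_G[OF X p1, of "\<lambda>_. \<epsilon>"] by simp
  have \<rho>\<xi>0: "AE \<omega> in M. \<rho> \<xi>0 \<omega> = Y \<omega>" using CAS'[OF X, of "\<lambda>_. \<epsilon>"] unfolding \<xi>0_def Y_def by simp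
  have \<xi>0C: "\<xi>0 \<in> C" unfolding C_def using \<xi>0L \<rho>\<xi>0 by auto
  have evq': "cond_evenly_convex M G p C" using evq unfolding EVQ_def C_def by auto
  have AC: "is_A_C M G p C {}"
    unfolding is_A_C_def
  proof (intro conjI allI impI)
    show "full_on M G p C {}" unfolding full_on_def using \<xi>0C by auto
    fix B assume "full_on M G p C B"
    then have B: "B \<in> sets G" and fo: "\<And>X'. X' \<in> LpG M G p \<Longrightarrow> \<exists>\<xi>\<in>C. AE \<omega> in M. \<omega> \<in> B \<longrightarrow> X' \<omega> = \<xi> \<omega>"
      unfolding full_on_def by auto
    define X1 where "X1 = (\<lambda>x. X x + (- 1))"
    have X1L: "X1 \<in> LpG M G p" unfolding X1_def using LpG_add_G[OF X p1, of "\<lambda>_. -1"] by simp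
    have \<rho>X1: "AE \<omega> in M. \<rho> X1 \<omega> = \<rho> X \<omega> + 1" using CAS'[OF X, of "\<lambda>_. -1"] unfolding X1_def by simp
    obtain \<xi> where \<xi>C: "\<xi> \<in> C" and eq: "AE \<omega> in M. \<omega> \<in> B \<longrightarrow> X1 \<omega> = \<xi> \<omega>" using fo[OF X1L] by auto
    have \<xi>L: "\<xi> \<in> LpG M G p" and \<xi>Y: "AE \<omega> in M. \<rho> \<xi> \<omega> \<le> Y \<omega>" using \<xi>C unfolding C_def by auto
    have "AE \<omega> in M. \<omega> \<in> B \<longrightarrow> \<rho> \<xi> \<omega> = \<rho> X1 \<omega>" by (rule locality[OF reg \<xi>L X1L B eq])
    then show "AE \<omega> in M. \<omega> \<in> B \<longrightarrow> \<omega> \<in> {}"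
      using \<rho>X1 \<xi>Y by eventually_elim (use eps in \<open>auto simp: Y_def\<close>)
  qed
  have outs: "outside M G C (space M - {}) X"
    unfolding outside_def
  proof
    assume "\<exists>A\<in>sets G. A \<subseteq> space M - {} \<and> measure M A > 0 \<and> (\<exists>\<xi>\<in>C. AE \<omega> in M. \<omega> \<in> A \<longrightarrow> X \<omega> = \<xi> \<omega>)"
    then obtain A \<xi> where A: "A \<in> sets G" "A \<subseteq> space M" "measure M A > 0" and \<xi>C: "\<xi> \<in> C"
      and eq: "AE \<omega> in M. \<omega> \<in> A \<longrightarrow> X \<omega> = \<xi> \<omega>" by auto
    have \<xi>L: "\<xi> \<in> LpG M G p" and \<xi>Y: "AE \<omega> in M. \<rho> \<xi> \<omega> \<le> Y \<omega>" using \<xi>C unfolding C_def by auto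
    have "AE \<omega> in M. \<omega> \<in> A \<longrightarrow> \<rho> \<xi> \<omega> = \<rho> X \<omega>" by (rule locality[OF reg \<xi>L X A(1) eq])
    then have "AE \<omega> in M. \<omega> \<notin> A" using \<xi>Y by eventually_elim (use eps in \<open>auto simp: Y_def\<close>)
    moreover have "A \<in> sets M" using A(1) by (rule setsGM)
    ultimately have "emeasure M A = 0" using A(2) by (subst (asm) AE_iff_measurable[of A]) auto
    then show False using A(3) by (simp add: measure_def)
  qed
  have "\<forall>AC. is_A_C M G p C AC \<longrightarrow>
        (\<forall>X\<in>LpG M G p. outside M G C (space M - AC) X \<longrightarrow>
          (\<exists>Z\<in>LpG M G (conj_exp p). \<forall>\<xi>\<in>C.
             AE \<omega> in M. \<omega> \<in> space M - AC \<longrightarrow>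
               cexp M G (\<lambda>x. Z x * X x) \<omega> > cexp M G (\<lambda>x. Z x * \<xi> x) \<omega>))"
    using evq' unfolding cond_evenly_convex_def by (rule conjunct2)
  then have "\<exists>Z\<in>LpG M G (conj_exp p). \<forall>\<xi>\<in>C.
             AE \<omega> in M. \<omega> \<in> space M - {} \<longrightarrow>
               cexp M G (\<lambda>x. Z x * X x) \<omega> > cexp M G (\<lambda>x. Z x * \<xi> x) \<omega>"
    using AC X outs by auto
  then obtain Z where ZL: "Z \<in> LpG M G (conj_exp p)"
    and sepZ: "\<And>\<xi>. \<xi> \<in> C \<Longrightarrow> AE \<omega> in M. \<omega> \<in> space M - {} \<longrightarrow> cexp M G (\<lambda>x. Z x * X x) \<omega> > cexp M G (\<lambda>x. Z x * \<xi> x) \<omega>"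
    by auto
  have sep: "AE \<omega> in M. cexp M G (\<lambda>x. Z x * X x) \<omega> > cexp M G (\<lambda>x. Z x * \<xi> x) \<omega>" if "\<xi> \<in> C" for \<xi>
    using sepZ[OF that] AE_space by eventually_elim auto
  have [measurable]: "Z \<in> borel_measurable M" using ZL by (rule LpG_meas)
  have cZ: "cfin Z" by (rule cfin_LpG[OF ZL conj_exp_ge1[OF p1]])
  have FXfin: "AE x in M. cexp M G (\<lambda>x. Z x * - X x) x = ereal (real_of_ereal (cexp M G (\<lambda>x. Z x * - X x) x))"
    by (rule cexp_finite[OF cfinF[OF ZL X]])
  have sep': "AE \<omega> in M. cexp M G (\<lambda>x. Z x * - \<xi> x) \<omega> > cexp M G (\<lambda>x. Z x * - X x) \<omega>" if "\<xi> \<in> C" for \<xi>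
  proof -
    have \<xi>L: "\<xi> \<in> LpG M G p" using that unfolding C_def by auto
    show ?thesis using sep[OF that] cexp_pos_neg[OF ZL X] cexp_pos_neg[OF ZL \<xi>L]
      by eventually_elim (simp add: ereal_uminus_less_reorder)
  qed
  define Fs where "Fs = {x \<in> space M. 0 < Z x}"
  have [measurable]: "Fs \<in> sets M" unfolding Fs_def by measurable
  define W1 where "W1 = (\<lambda>x. indicator Fs x * Z x)"
  have [measurable]: "W1 \<in> borel_measurable M" unfolding W1_def by measurable
  have cW1: "cfin W1" unfolding W1_def
    by (rule cfin_bound_mult[OF cZ, of _ "\<lambda>_. 1"]) (auto simp: indicator_def)
  have W1nn: "0 \<le> W1 x" for x unfolding W1_def Fs_def by (auto simp: indicator_def)
  have W1e: "AE x in M. cexp M G W1 x = enn2ereal (nn_cond_exp M G (\<lambda>x. ennreal (W1 x)) x)"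
    by (rule cexp_nonneg) (auto simp: W1nn)
  have step: "AE \<omega> in M. cexp M G (\<lambda>x. Z x * - X x) \<omega> < cexp M G (\<lambda>x. Z x * - \<xi>0 x) \<omega> - ereal (real k) * cexp M G W1 \<omega>" for k :: nat
  proof -
    define \<xi>k where "\<xi>k = (\<lambda>x. \<xi>0 x + real k * indicator Fs x)"
    have \<xi>kL: "\<xi>k \<in> LpG M G p" unfolding \<xi>k_def
      by (rule LpG_add_bdd[OF \<xi>0L p1, of _ "\<lambda>_. real k"]) (auto simp: indicator_def)
    have "AE \<omega> in M. \<rho> \<xi>k \<omega> \<le> \<rho> \<xi>0 \<omega>"
      using mon \<xi>kL \<xi>0L unfolding MON_dec_def \<xi>k_def by (auto simp: indicator_def)
    then have "\<xi>k \<in> C" unfolding C_def using \<xi>kL \<rho>\<xi>0 by (auto elim: eventually_mono[OF eventually_conj])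
    note s = sep'[OF this]
    have c1: "cfin (\<lambda>x. Z x * - \<xi>0 x)" by (rule cfinF[OF ZL \<xi>0L])
    have S: "cfin (\<lambda>x. - real k * W1 x) \<and> (AE x in M. cexp M G (\<lambda>x. - real k * W1 x) x = ereal (- real k) * cexp M G W1 x)"
      by (rule cexp_scal[OF cW1]) simp
    have A: "cfin (\<lambda>x. Z x * - \<xi>0 x + - real k * W1 x) \<and> (AE x in M. cexp M G (\<lambda>x. Z x * - \<xi>0 x + - real k * W1 x) x = cexp M G (\<lambda>x. Z x * - \<xi>0 x) x + cexp M G (\<lambda>x. - real k * W1 x) x)"
      by (rule cexp_add[OF c1 conjunct1[OF S]])
    have [measurable]: "\<xi>0 \<in> borel_measurable M" using \<xi>0L by (rule LpG_meas)
    have B: "AE x in M. cexp M G (\<lambda>x. Z x * - \<xi>k x) x = cexp M G (\<lambda>x. Z x * - \<xi>0 x + - real k * W1 x) x"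
      by (rule cexp_eq_pw) (auto simp: \<xi>k_def W1_def algebra_simps)
    show ?thesis using s conjunct2[OF A] conjunct2[OF S] B
    proof eventually_elim
      case (elim x)
      have "ereal (- real k) * cexp M G W1 x = - (ereal (real k) * cexp M G W1 x)" by (cases "cexp M G W1 x") auto
      then show ?case using elim by (simp add: minus_ereal_def)
    qed
  qed
  have "AE \<omega> in M. \<forall>k::nat. cexp M G (\<lambda>x. Z x * - X x) \<omega> < cexp M G (\<lambda>x. Z x * - \<xi>0 x) \<omega> - ereal (real k) * cexp M G W1 \<omega>"
    using step by (simp add: AE_all_countable)
  then have "AE \<omega> in M. nn_cond_exp M G (\<lambda>x. ennreal (W1 x)) \<omega> = 0"
    using W1e FXfin cexp_finite[OF cfinF[OF ZL \<xi>0L]] cexp_finite[OF cW1]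
  proof eventually_elim
    case (elim x)
    obtain a b c where abc: "cexp M G (\<lambda>x. Z x * - X x) x = ereal a" "cexp M G (\<lambda>x. Z x * - \<xi>0 x) x = ereal b"
      "cexp M G W1 x = ereal c" using elim by metis
    have c0: "0 \<le> c" using elim(2) abc(3) by (metis enn2ereal_nonneg ereal_less_eq(5))
    have lt: "a < b - real k * c" for k :: nat using elim(1) abc by (simp add: spec[of _ k])
    have "c = 0"
    proof (rule ccontr)
      assume "c \<noteq> 0"
      then have "0 < c" using c0 by simp
      obtain k :: nat where "(b - a) / c < real k" using reals_Archimedean2 by blast
      then have "b - a < real k * c" using \<open>0 < c\<close> by (simp add: divide_less_eq mult.commute)
      then show False using lt[of k] by simp
    qed
    then have "enn2ereal (nn_cond_exp M G (\<lambda>x. ennreal (W1 x)) x) = 0" using elim(2) abc(3) by (simp add: zero_ereal_def)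
    then show ?case by (simp add: zero_ennreal.rep_eq[symmetric] enn2ereal_inject)
  qed
  then have "AE x in M. W1 x = 0" by (rule nn_zero_imp[rotated 2]) (auto simp: W1nn)
  then have Zle: "AE x in M. Z x \<le> 0" using AE_space by eventually_elim (auto simp: W1_def Fs_def indicator_def split: if_splits)
  define N where "N = nn_cond_exp M G (\<lambda>x. ennreal (- Z x))"
  have [measurable]: "N \<in> borel_measurable G" unfolding N_def by simp
  have [measurable]: "N \<in> borel_measurable M" unfolding N_def by simp
  have EZp: "AE x in M. nn_cond_exp M G (\<lambda>x. ennreal (Z x)) x = 0"
  proof -
    have "AE x in M. nn_cond_exp M G (\<lambda>x. ennreal (Z x)) x = nn_cond_exp M G (\<lambda>_. 0) x"
      by (rule FMS.nn_cond_exp_cong) (use Zle in \<open>auto simp: ennreal_neg elim: eventually_mono\<close>)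
    moreover have "AE x in M. nn_cond_exp M G (\<lambda>_. 0) x = 0" using nn_ce_const[of "\<lambda>_. 0"] by simp
    ultimately show ?thesis by eventually_elim simp
  qed
  have cZe: "AE x in M. cexp M G Z x = - enn2ereal (N x)"
    using EZp by eventually_elim (simp add: cexp_def N_def zero_ennreal.rep_eq)
  have Nfin: "AE x in M. N x < top" using cfin_parts[OF cZ] unfolding N_def by eventually_elim simp
  define Bs where "Bs = {x \<in> space M. N x = 0}"
  have BsG: "Bs \<in> sets G" unfolding Bs_def spaceG[symmetric] by measurable
  have [measurable]: "Bs \<in> sets M" using BsG by (rule setsGM)
  have "(\<integral>\<^sup>+ x. indicator Bs x * N x \<partial>M) = (\<integral>\<^sup>+ x. indicator Bs x * ennreal (- Z x) \<partial>M)"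
    unfolding N_def by (rule FMS.nn_cond_exp_intg) (use BsG in auto)
  moreover have "(\<integral>\<^sup>+ x. indicator Bs x * N x \<partial>M) = 0"
    by (rule nn_integral_0_iff_AE[THEN iffD2]) (auto simp: Bs_def indicator_def)
  ultimately have "(\<integral>\<^sup>+ x. indicator Bs x * ennreal (- Z x) \<partial>M) = 0" by simp
  then have "AE x in M. indicator Bs x * ennreal (- Z x) = 0" by (subst (asm) nn_integral_0_iff_AE) auto
  then have BZ: "AE x in M. x \<in> Bs \<longrightarrow> Z x = 0" using Zle
    by eventually_elim (auto simp: indicator_def ennreal_eq_0_iff)
  have [measurable]: "\<xi>0 \<in> borel_measurable M" using \<xi>0L by (rule LpG_meas)
  have z1: "AE x in M. x \<in> Bs \<longrightarrow> cexp M G (\<lambda>x. Z x * X x) x = 0"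
    by (rule cexp_local_zero[OF cfin_prod[OF X ZL p1] BsG]) (use BZ in \<open>auto elim: eventually_mono\<close>)
  have z2: "AE x in M. x \<in> Bs \<longrightarrow> cexp M G (\<lambda>x. Z x * \<xi>0 x) x = 0"
    by (rule cexp_local_zero[OF cfin_prod[OF \<xi>0L ZL p1] BsG]) (use BZ in \<open>auto elim: eventually_mono\<close>)
  have Npos: "AE x in M. N x \<noteq> 0" using z1 z2 sep[OF \<xi>0C] AE_space
    by eventually_elim (auto simp: Bs_def)
  define cz where "cz = (\<lambda>x. real_of_ereal (cexp M G Z x))"
  have [measurable]: "cz \<in> borel_measurable G" unfolding cz_def by measurable
  have [measurable]: "cz \<in> borel_measurable M" by (rule measGM) simp
  have czneg: "AE x in M. cexp M G Z x = ereal (cz x) \<and> cz x < 0"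
    using cZe Nfin Npos
  proof eventually_elim
    case (elim x)
    obtain r where r: "N x = ennreal r" "0 \<le> r" using elim(2) by (cases "N x" rule: ennreal_cases) auto
    then have "r \<noteq> 0" using elim(3) by auto
    then show ?case using elim(1) r unfolding cz_def by simp
  qed
  define Z' where "Z' = (\<lambda>x. (1 / cz x) * Z x)"
  have Z'L: "Z' \<in> LpG M G (conj_exp p)" unfolding Z'_def
    by (rule LpG_scale[OF ZL conj_exp_ge1[OF p1]]) simp
  have Z'nn: "AE x in M. 0 \<le> Z' x" using czneg Zle
    by eventually_elim (auto simp: Z'_def intro: divide_nonpos_neg)
  have "AE x in M. cexp M G Z' x = ereal (1 / cz x) * cexp M G Z x"
    unfolding Z'_def using cexp_scal[OF cZ, of "\<lambda>x. 1 / cz x"] by simp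
  then have Z'1: "AE x in M. cexp M G Z' x = 1" using czneg by eventually_elim auto
  have Z'P: "Z' \<in> PqG M G (conj_exp p)" unfolding PqG_def using Z'L Z'nn Z'1 by auto
  have Frel: "AE x in M. cexp M G (\<lambda>x. Z' x * - W x) x = ereal (1 / cz x) * cexp M G (\<lambda>x. Z x * - W x) x"
    if WL: "W \<in> LpG M G p" for W
  proof -
    have [measurable]: "W \<in> borel_measurable M" using WL by (rule LpG_meas)
    have S: "AE x in M. cexp M G (\<lambda>x. (1 / cz x) * (Z x * - W x)) x = ereal (1 / cz x) * cexp M G (\<lambda>x. Z x * - W x) x"
      using cexp_scal[OF cfinF[OF ZL WL], of "\<lambda>x. 1 / cz x"] by simp
    have "AE x in M. cexp M G (\<lambda>x. Z' x * - W x) x = cexp M G (\<lambda>x. (1 / cz x) * (Z x * - W x)) x"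
      by (rule cexp_eq_pw) (auto simp: Z'_def)
    then show ?thesis using S by eventually_elim simp
  qed
  have mem: "AE \<omega> in M. cexp M G (\<lambda>x. Z' x * - \<eta> x) \<omega> - ereal (\<rho> \<eta> \<omega>) \<le> cexp M G (\<lambda>x. Z' x * - X x) \<omega> - ereal (Y \<omega>)"
    if etaL: "\<eta> \<in> LpG M G p" for \<eta>
  proof -
    have [measurable]: "\<eta> \<in> borel_measurable M" using etaL by (rule LpG_meas)
    have [measurable]: "\<rho> \<eta> \<in> borel_measurable G" using etaL by (rule rho_measG)
    define L where "L = (\<lambda>x. \<rho> \<eta> x - Y x)"
    have [measurable]: "L \<in> borel_measurable G" unfolding L_def by measurable
    define \<xi> where "\<xi> = (\<lambda>x. \<eta> x + L x)"
    have \<xi>L: "\<xi> \<in> LpG M G p" unfolding \<xi>_def by (rule LpG_add_G[OF etaL p1]) simp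
    have "AE x in M. \<rho> \<xi> x = \<rho> \<eta> x - L x" unfolding \<xi>_def by (rule CAS'[OF etaL]) simp
    then have "\<xi> \<in> C" unfolding C_def using \<xi>L by (auto simp: L_def elim: eventually_mono)
    note s = sep'[OF this]
    have sh: "AE x in M. cexp M G (\<lambda>x. Z x * - (\<eta> x + L x)) x = cexp M G (\<lambda>x. Z x * - \<eta> x) x - ereal (L x) * cexp M G Z x"
      by (rule cexp_shift[OF cfinF[OF ZL etaL] cZ]) auto
    show ?thesis using s sh Frel[OF etaL] Frel[OF X] czneg FXfin cexp_finite[OF cfinF[OF ZL etaL]]
      unfolding \<xi>_def
    proof eventually_elim
      case (elim x)
      define a where "a = real_of_ereal (cexp M G (\<lambda>x. Z x * - \<eta> x) x)"
      have a: "cexp M G (\<lambda>x. Z x * - \<eta> x) x = ereal a" using elim(7) unfolding a_def .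
      define b where "b = real_of_ereal (cexp M G (\<lambda>x. Z x * - X x) x)"
      have b: "cexp M G (\<lambda>x. Z x * - X x) x = ereal b" using elim(6) unfolding b_def .
      have cz0: "cz x < 0" and cze: "cexp M G Z x = ereal (cz x)" using elim(5) by auto
      have "b < a - L x * cz x" using elim(1,2) a b cze by simp
      then have "(a - L x * cz x) / cz x < b / cz x" using cz0 by (simp add: divide_strict_right_mono_neg)
      then have "a / cz x - L x < b / cz x" using cz0 by (simp add: diff_divide_distrib)
      then have "a / cz x - \<rho> \<eta> x \<le> b / cz x - Y x" unfolding L_def by simp
      then show ?case using elim(3,4) a b by simp
    qed
  qed
  have rsle: "AE \<omega> in M. rho_star M G p \<rho> Z' \<omega> \<le> cexp M G (\<lambda>x. Z' x * - X x) \<omega> - ereal (Y \<omega>)"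
  proof (rule ess_sup_least[OF rho_star_prop])
    show "(\<lambda>\<omega>. cexp M G (\<lambda>x. Z' x * - X x) \<omega> - ereal (Y \<omega>)) \<in> borel_measurable G" by measurable
    show "\<forall>g\<in>(\<lambda>\<xi>. \<lambda>\<omega>. cexp M G (\<lambda>x. Z' x * - \<xi> x) \<omega> - ereal (\<rho> \<xi> \<omega>)) ` LpG M G p.
        AE \<omega> in M. g \<omega> \<le> cexp M G (\<lambda>x. Z' x * - X x) \<omega> - ereal (Y \<omega>)"
      using mem by auto
  qed
  have "AE \<omega> in M. ereal (\<rho> X \<omega> - \<epsilon>) \<le> cexp M G (\<lambda>x. Z' x * - X x) \<omega> - rho_star M G p \<rho> Z' \<omega>"
    using rsle cexp_finite[OF cfinF[OF Z'L X]]
  proof eventually_elim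
    case (elim x)
    define b where "b = real_of_ereal (cexp M G (\<lambda>x. Z' x * - X x) x)"
    have b: "cexp M G (\<lambda>x. Z' x * - X x) x = ereal b" using elim(2) unfolding b_def .
    show ?case using H3[of "rho_star M G p \<rho> Z' x" b "ereal (Y x)"] elim(1) b unfolding Y_def by simp
  qed
  then show ?thesis using Z'P by auto
qed


lemma part2:
  assumes reg: "REG M G p \<rho>" and mon: "MON_dec M G p \<rho>" and evq: "EVQ M G p \<rho>" and cas: "CAS M G p \<rho>"
    and X: "X \<in> LpG M G p"
  shows "AE \<omega> in M. ereal (\<rho> X \<omega>)
                 = cond_ess_sup M G ((\<lambda>Z. \<lambda>\<omega>. cexp M G (\<lambda>x. Z x * - X x) \<omega> - rho_star M G p \<rho> Z \<omega>)
                                     ` PqG M G (conj_exp p)) \<omega>"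
proof -
  define fam where "fam = (\<lambda>Z. \<lambda>\<omega>. cexp M G (\<lambda>x. Z x * - X x) \<omega> - rho_star M G p \<rho> Z \<omega>) ` PqG M G (conj_exp p)"
  define S where "S = cond_ess_sup M G fam"
  have SP: "is_cond_ess_sup M G fam S" unfolding S_def by (rule cond_ess_sup_ex[OF prob_space_axioms sub])
  have [measurable]: "\<rho> X \<in> borel_measurable G" using X by (rule rho_measG)
  have up: "AE \<omega> in M. S \<omega> \<le> ereal (\<rho> X \<omega>)"
  proof (rule ess_sup_least[OF SP])
    show "(\<lambda>\<omega>. ereal (\<rho> X \<omega>)) \<in> borel_measurable G" by measurable
    show "\<forall>g\<in>fam. AE \<omega> in M. g \<omega> \<le> ereal (\<rho> X \<omega>)"
    proof
      fix g assume "g \<in> fam"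
      then obtain Z where Z: "Z \<in> PqG M G (conj_exp p)" and g: "g = (\<lambda>\<omega>. cexp M G (\<lambda>x. Z x * - X x) \<omega> - rho_star M G p \<rho> Z \<omega>)"
        unfolding fam_def by auto
      have ZL: "Z \<in> LpG M G (conj_exp p)" using Z by (rule PqG_L)
      show "AE \<omega> in M. g \<omega> \<le> ereal (\<rho> X \<omega>)"
        using rho_star_ge[OF X, of Z] cexp_finite[OF cfinF[OF ZL X]] unfolding g
      proof eventually_elim
        case (elim x)
        define y where "y = real_of_ereal (cexp M G (\<lambda>x. Z x * - X x) x)"
        have y: "cexp M G (\<lambda>x. Z x * - X x) x = ereal y" using elim(2) unfolding y_def .
        show ?case using H1[of y "\<rho> X x" "rho_star M G p \<rho> Z x"] elim(1) y by simp
      qed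
    qed
  qed
  have lo: "AE \<omega> in M. ereal (\<rho> X \<omega> - 1 / (real n + 1)) \<le> S \<omega>" for n :: nat
  proof -
    obtain Z' where Z': "Z' \<in> PqG M G (conj_exp p)"
      and b: "AE \<omega> in M. ereal (\<rho> X \<omega> - 1 / (real n + 1)) \<le> cexp M G (\<lambda>x. Z' x * - X x) \<omega> - rho_star M G p \<rho> Z' \<omega>"
      using key[OF reg mon evq cas X, of "1 / (real n + 1)"] by auto
    have "(\<lambda>\<omega>. cexp M G (\<lambda>x. Z' x * - X x) \<omega> - rho_star M G p \<rho> Z' \<omega>) \<in> fam"
      unfolding fam_def using Z' by auto
    from ess_sup_upper[OF SP this] b show ?thesis by eventually_elim (rule order_trans)
  qed
  have "AE \<omega> in M. \<forall>n::nat. ereal (\<rho> X \<omega> - 1 / (real n + 1)) \<le> S \<omega>"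
    using lo by (simp add: AE_all_countable)
  then have lo': "AE \<omega> in M. ereal (\<rho> X \<omega>) \<le> S \<omega>"
  proof eventually_elim
    case (elim x)
    show ?case
    proof (cases "S x")
      case (real t)
      have "\<rho> X x \<le> t"
      proof (rule ccontr)
        assume "\<not> \<rho> X x \<le> t"
        then have "0 < \<rho> X x - t" by simp
        then obtain n :: nat where "1 / (real n + 1) < \<rho> X x - t"
          by (metis add.commute nat_approx_posE of_nat_Suc)
        then show False using elim[rule_format, of n] real by simp
      qed
      then show ?thesis using real by simp
    next
      case PInf then show ?thesis by simp
    next
      case MInf then show ?thesis using elim[rule_format, of 0] by simp
    qed
  qed
  show ?thesis using up lo' unfolding S_def fam_def by eventually_elim (rule antisym)
qed

end

theorem mainTheorem3:
  fixes M G :: "'a measure" and p :: ereal and \<rho> :: "('a \<Rightarrow> real) \<Rightarrow> ('a \<Rightarrow> real)"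
  assumes "prob_space M" and "subalgebra M G" and "1 \<le> p"
    and "well_defined_ae M G p \<rho>"
  shows "(MON_dec M G p \<rho> \<and> REG M G p \<rho> \<and> CAS M G p \<rho> \<longrightarrow>
           (\<forall>Z\<in>PqG M G (conj_exp p). \<forall>X\<in>LpG M G p.
              AE \<omega> in M. R_fun M G p \<rho> (cexp M G (\<lambda>x. Z x * - X x)) Z \<omega>
                 = cexp M G (\<lambda>x. Z x * - X x) \<omega> - rho_star M G p \<rho> Z \<omega>))
       \<and> (REG M G p \<rho> \<and> MON_dec M G p \<rho> \<and> EVQ M G p \<rho> \<and> CAS M G p \<rho> \<longrightarrow>
           (\<forall>X\<in>LpG M G p.
              AE \<omega> in M. ereal (\<rho> X \<omega>)
                 = cond_ess_sup M G ((\<lambda>Z. \<lambda>\<omega>. cexp M G (\<lambda>x. Z x * - X x) \<omega> - rho_star M G p \<rho> Z \<omega>)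
                                     ` PqG M G (conj_exp p)) \<omega>))"
proof -
  interpret RM M G p \<rho>
    by (rule RM.intro, rule PS.intro, fact, unfold_locales) (use assms in auto)
  show ?thesis using part1 part2 by auto
qed

end
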